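(* Let $\{s_n\}_{n\ge1}$ and $\{t_n\}_{n\ge1}$ be sequences of positive real numbers such that: (1) $s_n \geq t_n \geq 2$ for all $n\ge1$; (2) $s_{n+1} \geq s_n+t_n$ for all $n\ge1$; (3) $\lim_{n \to \infty}s_n=\infty$. Then \[ \dim_\mathrm{H}\mathbb{E}(\{s_n\},\{t_n\})=\liminf_{n \to\infty}\frac{\sum_{k=1}^n \log t_k}{\sum_{k=1}^{n+1} \log s_k+\log s_{n+1}-\log t_{n+1}}, \] where \[ \mathbb{E}(\{s_n\},\{t_n\}):=\Big\{x\in(0,1)\setminus\mathbb{Q}: s_{n}<d_{n}(x)\leq s_n+t_n \text{ for all } n\geq1\Big\}. \]
   Context: Engel expansion: define $T:[0,1)\to[0,1)$ by $T(0)=0$ and $T(x)=x\lceil 1/x\rceil-1$ for $x\in(0,1)$, where $\lceil y\rceil$ is the least integer not less than $y$. For irrational $x\in(0,1)$ set $d_1(x)=\lceil 1/x\rceil$ and $d_{n+1}(x)=d_1(T^n(x))$ for $n\ge1$; then $x=\sum_{n\ge1}\frac{1}{d_1(x)\cdots d_n(x)}$, with $2\le d_1(x)\le d_2(x)\le\cdots$ and $d_n(x)\to\infty$. The integers $d_n(x)$ are the digits of the Engel expansion of $x$. $\dim_\mathrm{H}$ denotes Hausdorff dimension. *)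

theory Defs
  imports "HOL-Analysis.Analysis" "HOL-Library.Liminf_Limsup"
begin

definition engel_T :: "real \<Rightarrow> real" where
  "engel_T x = (if x = 0 then 0 else x * of_int \<lceil>1 / x\<rceil> - 1)"

text \<open>Engel digit d_n(x), meaningful for n >= 1: d_1(x) = ceil(1/x), d_(n+1)(x) = d_1(T^n x).\<close>
definition engel_digit :: "nat \<Rightarrow> real \<Rightarrow> int" where
  "engel_digit n x = \<lceil>1 / ((engel_T ^^ (n - 1)) x)\<rceil>"

definition hausdorff_content :: "real \<Rightarrow> real \<Rightarrow> real set \<Rightarrow> ennreal" where
  "hausdorff_content s \<delta> E =
     (INF U \<in> {U :: nat \<Rightarrow> real set. E \<subseteq> (\<Union>i. U i) \<and>
                 (\<forall>i. bounded (U i) \<and> diameter (U i) \<le> \<delta>)}.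
        \<Sum>i. ennreal (diameter (U i) powr s))"

definition hausdorff_measure :: "real \<Rightarrow> real set \<Rightarrow> ennreal" where
  "hausdorff_measure s E = (SUP \<delta> \<in> {0<..}. hausdorff_content s \<delta> E)"

definition hausdorff_dim :: "real set \<Rightarrow> real" where
  "hausdorff_dim E = Inf {s. 0 < s \<and> hausdorff_measure s E = 0}"

definition engel_set :: "(nat \<Rightarrow> real) \<Rightarrow> (nat \<Rightarrow> real) \<Rightarrow> real set" where
  "engel_set s t = {x \<in> {0<..<1} - \<rat>.
      \<forall>n\<ge>1. s n < of_int (engel_digit n x) \<and> of_int (engel_digit n x) \<le> s n + t n}"

end

theory Submission
  imports Defs "HOL-Probability.Probability"
begin


lemma T_basic:
  fixes x :: real
  assumes "0 < x" "x < 1"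
  shows "\<lceil>1/x\<rceil> \<ge> 2" "1 / real_of_int \<lceil>1/x\<rceil> \<le> x"
    "x * real_of_int \<lceil>1/x\<rceil> = 1 + engel_T x"
    "0 \<le> engel_T x" "engel_T x < 1"
proof -
  have g: "1/x > 1" using assms by simp
  have c1: "real_of_int \<lceil>1/x\<rceil> \<ge> 1/x" by linarith
  have c2: "real_of_int \<lceil>1/x\<rceil> < 1/x + 1" by linarith
  show "\<lceil>1/x\<rceil> \<ge> 2" using g by linarith
  show "1 / real_of_int \<lceil>1/x\<rceil> \<le> x" using c1 g assms
    by (smt (verit, best) divide_le_eq le_divide_eq_1_pos mult.commute)
  show e: "x * real_of_int \<lceil>1/x\<rceil> = 1 + engel_T x"
    using assms by (simp add: engel_T_def)
  have "x * real_of_int \<lceil>1/x\<rceil> \<ge> x * (1/x)" using c1 assms by (intro mult_left_mono) auto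
  then show "0 \<le> engel_T x" using e assms by simp
  have "x * real_of_int \<lceil>1/x\<rceil> < x * (1/x + 1)" using c2 assms by (intro mult_strict_left_mono) auto
  then show "engel_T x < 1" using e assms by (simp add: algebra_simps)
qed

definition esum :: "(nat \<Rightarrow> real) \<Rightarrow> real" where
  "esum a = (\<Sum>m. 1 / (\<Prod>j\<le>m. a j))"

lemma esum_summable:
  fixes a :: "nat \<Rightarrow> real"
  assumes "\<And>j. a j \<ge> 2"
  shows "summable (\<lambda>m. 1 / (\<Prod>j\<le>m. a j))"
proof -
  have apos: "a j > 0" for j using assms[of j] by linarith
  have b: "norm (1 / (\<Prod>j\<le>n. a j)) \<le> (1/2)^(Suc n)" for n
  proof -
    have "(\<Prod>j\<le>n. (2::real)) \<le> (\<Prod>j\<le>n. a j)"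
      by (rule prod_mono) (simp add: assms)
    then have h: "2^(Suc n) \<le> (\<Prod>j\<le>n. a j)" by simp
    have p: "(\<Prod>j\<le>n. a j) > 0" by (rule prod_pos) (simp add: apos)
    have "1 / (\<Prod>j\<le>n. a j) \<le> 1 / 2^(Suc n)"
      by (rule divide_left_mono) (use h p in auto)
    then show ?thesis using p by (simp add: power_one_over)
  qed
  have s: "summable (\<lambda>m. (1/2::real)^(Suc m))" by simp
  show ?thesis by (rule summable_comparison_test'[OF s b])
qed

lemma esum_rec:
  assumes "\<And>j. a j \<ge> 2"
  shows "esum a = (1 + esum (\<lambda>m. a (Suc m))) / a 0"
proof -
  have s1: "summable (\<lambda>m. 1 / (\<Prod>j\<le>m. a j))" by (rule esum_summable[OF assms])
  have s2: "summable (\<lambda>m. 1 / (\<Prod>j\<le>m. a (Suc j)))" by (rule esum_summable) (use assms in auto)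
  have "esum a = 1 / (\<Prod>j\<le>0. a j) + (\<Sum>m. 1 / (\<Prod>j\<le>Suc m. a j))"
    unfolding esum_def using suminf_split_head[OF s1] by simp
  also have "(\<lambda>m. 1 / (\<Prod>j\<le>Suc m. a j)) = (\<lambda>m. (1 / a 0) * (1 / (\<Prod>j\<le>m. a (Suc j))))"
    by (subst prod.atMost_Suc_shift) simp
  also have "(\<Sum>m. (1 / a 0) * (1 / (\<Prod>j\<le>m. a (Suc j)))) = (1 / a 0) * esum (\<lambda>m. a (Suc m))"
    unfolding esum_def by (rule suminf_mult[OF s2])
  finally show ?thesis using assms[of 0] by (simp add: field_simps)
qed

lemma esum_pos:
  assumes "\<And>j. a j \<ge> 2"
  shows "esum a > 0"
  unfolding esum_def
proof (rule suminf_pos)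
  show "summable (\<lambda>m. 1 / (\<Prod>j\<le>m. a j))" by (rule esum_summable[OF assms])
  fix n
  have apos: "a j > 0" for j using assms[of j] by linarith
  have "0 < (\<Prod>j\<le>n. a j)" by (rule prod_pos) (simp add: apos)
  then show "0 < 1 / (\<Prod>j\<le>n. a j)" by simp
qed

lemma esum_upper:
  assumes "\<And>j. a j \<ge> 2" "\<And>j. a j \<ge> a 0"
  shows "esum a \<le> 1 / (a 0 - 1)"
proof -
  have a0: "a 0 \<ge> 2" using assms(1) by auto
  have "esum a \<le> (\<Sum>m. (1 / a 0)^(Suc m))"
    unfolding esum_def
  proof (rule suminf_le)
    show "summable (\<lambda>m. 1 / (\<Prod>j\<le>m. a j))" by (rule esum_summable[OF assms(1)])
    show "summable (\<lambda>m. (1 / a 0)^(Suc m))" using a0 by simp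
    fix m
    have "(\<Prod>j\<le>m. a 0) \<le> (\<Prod>j\<le>m. a j)"
      proof (rule prod_mono)
      fix i assume "i \<in> {..m}"
      show "0 \<le> a 0 \<and> a 0 \<le> a i" using a0 assms(2)[of i] by linarith
    qed
    then have h: "a 0 ^ Suc m \<le> (\<Prod>j\<le>m. a j)" by simp
    have p: "a 0 ^ Suc m > 0" using a0 by simp
    have "1 / (\<Prod>j\<le>m. a j) \<le> 1 / a 0 ^(Suc m)"
      by (rule divide_left_mono) (use h p in simp_all)
    then show "1 / (\<Prod>j\<le>m. a j) \<le> (1 / a 0)^(Suc m)" by (simp add: power_one_over)
  qed
  also have "(\<Sum>m. (1 / a 0)^(Suc m)) = (1/a 0) / (1 - 1 / a 0)"
  proof -
    have q: "norm (1 / a 0) < 1" using a0 by simp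
    have "(\<Sum>m. (1 / a 0)^(Suc m)) = (\<Sum>m. (1 / a 0) * (1 / a 0)^m)"
      by (simp only: power_Suc)
    also have "\<dots> = (1 / a 0) * (\<Sum>m. (1 / a 0)^m)"
      by (rule suminf_mult[OF summable_geometric[OF q]])
    also have "\<dots> = (1/a 0) / (1 - 1 / a 0)" using suminf_geometric[OF q] by simp
    finally show ?thesis .
  qed
  also have "\<dots> = 1 / (a 0 - 1)" using a0 by (simp add: field_simps)
  finally show ?thesis .
qed

primrec Rr :: "(nat \<Rightarrow> int) \<Rightarrow> nat \<Rightarrow> int" where
  "Rr w 0 = 0"
| "Rr w (Suc n) = w (Suc n) * Rr w n + 1"

definition Dp :: "(nat \<Rightarrow> int) \<Rightarrow> nat \<Rightarrow> int" where
  "Dp w n = (\<Prod>k\<in>{1..n}. w k)"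

lemma Dp_0[simp]: "Dp w 0 = 1" by (simp add: Dp_def)

lemma Dp_Suc: "Dp w (Suc n) = Dp w n * w (Suc n)"
  unfolding Dp_def by (simp add: prod.nat_ivl_Suc' mult.commute)

lemma Rr_cong: "(\<And>k. 1 \<le> k \<Longrightarrow> k \<le> n \<Longrightarrow> w k = v k) \<Longrightarrow> Rr w n = Rr v n"
  by (induction n) auto

lemma Dp_cong: "(\<And>k. 1 \<le> k \<Longrightarrow> k \<le> n \<Longrightarrow> w k = v k) \<Longrightarrow> Dp w n = Dp v n"
  unfolding Dp_def by (rule prod.cong) auto

lemma Rr_identity:
  fixes y :: "nat \<Rightarrow> real"
  assumes "\<And>k. k < n \<Longrightarrow> y k * of_int (w (Suc k)) = 1 + y (Suc k)"
  shows "of_int (Dp w n) * y 0 = of_int (Rr w n) + y n"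
  using assms
proof (induction n)
  case 0 then show ?case by simp
next
  case (Suc n)
  have ih: "of_int (Dp w n) * y 0 = of_int (Rr w n) + y n" using Suc by simp
  have st: "y n * of_int (w (Suc n)) = 1 + y (Suc n)" using Suc.prems by simp
  have "of_int (Dp w (Suc n)) * y 0 = (of_int (Dp w n) * y 0) * of_int (w (Suc n))"
    by (simp add: Dp_Suc)
  also have "\<dots> = of_int (Rr w n) * of_int (w (Suc n)) + y n * of_int (w (Suc n))"
    by (subst ih) (simp add: algebra_simps)
  also have "\<dots> = of_int (Rr w (Suc n)) + y (Suc n)" by (simp add: st algebra_simps)
  finally show ?case .
qed


locale eng =
  fixes s t :: "nat \<Rightarrow> real"
  assumes pos: "\<forall>n\<ge>1. s n > 0 \<and> t n > 0"
    and h1: "\<forall>n\<ge>1. s n \<ge> t n \<and> t n \<ge> 2"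
    and h2: "\<forall>n\<ge>1. s (n + 1) \<ge> s n + t n"
    and h3: "filterlim s at_top sequentially"
begin

lemma t_ge2: "1 \<le> n \<Longrightarrow> t n \<ge> 2" using h1 by auto
lemma t_le_s: "1 \<le> n \<Longrightarrow> t n \<le> s n" using h1 by auto
lemma s_ge2: "1 \<le> n \<Longrightarrow> s n \<ge> 2" using h1 by force
lemma s_step: "1 \<le> n \<Longrightarrow> s (Suc n) \<ge> s n + t n" using h2 by auto
lemma s_pos: "1 \<le> n \<Longrightarrow> s n > 0" using s_ge2[of n] by linarith
lemma t_pos: "1 \<le> n \<Longrightarrow> t n > 0" using t_ge2[of n] by linarith

definition C :: "nat \<Rightarrow> int set" where
  "C n = {\<lfloor>s n\<rfloor> + 1 .. \<lfloor>s n + t n\<rfloor>}"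

lemma C_iff: "d \<in> C n \<longleftrightarrow> s n < of_int d \<and> of_int d \<le> s n + t n"
  unfolding C_def by (simp add: floor_less_iff le_floor_iff) linarith

lemma C_finite[simp]: "finite (C n)" by (simp add: C_def)

lemma card_C: "card (C n) = nat (\<lfloor>s n + t n\<rfloor> - \<lfloor>s n\<rfloor>)"
  by (simp add: C_def)

lemma card_C_bounds:
  assumes "1 \<le> n"
  shows "t n / 2 \<le> real (card (C n))" "real (card (C n)) \<le> 2 * t n"
proof -
  have a: "of_int \<lfloor>s n + t n\<rfloor> > s n + t n - 1" "of_int \<lfloor>s n + t n\<rfloor> \<le> s n + t n"
    by linarith+
  have b: "of_int \<lfloor>s n\<rfloor> > s n - 1" "of_int \<lfloor>s n\<rfloor> \<le> s n" by linarith+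
  have t2: "t n \<ge> 2" using t_ge2[OF assms] .
  have nn: "\<lfloor>s n + t n\<rfloor> - \<lfloor>s n\<rfloor> \<ge> 0" using a b t2 by linarith
  have eq: "real (card (C n)) = of_int (\<lfloor>s n + t n\<rfloor> - \<lfloor>s n\<rfloor>)"
    using nn by (simp add: card_C)
  show "t n / 2 \<le> real (card (C n))" unfolding eq of_int_diff using a b t2 by linarith
  show "real (card (C n)) \<le> 2 * t n" unfolding eq of_int_diff using a b t2 by linarith
qed

lemma C_nonempty: "1 \<le> n \<Longrightarrow> C n \<noteq> {}"
  using card_C_bounds(1)[of n] t_ge2[of n] by auto

lemma C_ge3: "1 \<le> n \<Longrightarrow> d \<in> C n \<Longrightarrow> d \<ge> 3"
  using s_ge2[of n] by (simp add: C_iff)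

lemma C_le: "1 \<le> n \<Longrightarrow> d \<in> C n \<Longrightarrow> of_int d \<le> 2 * s n"
  using t_le_s[of n] by (simp add: C_iff)

lemma C_gt: "d \<in> C n \<Longrightarrow> of_int d > s n"
  by (simp add: C_iff)

lemma C_step: "1 \<le> n \<Longrightarrow> d \<in> C n \<Longrightarrow> d' \<in> C (Suc n) \<Longrightarrow> d + 1 \<le> d'"
  using s_step[of n] by (simp add: C_iff)

lemma s_mono: assumes "1 \<le> m" "m \<le> n" shows "s m \<le> s n"
  using assms(2)
proof (induction n rule: dec_induct)
  case base then show ?case by simp
next
  case (step n) then show ?case using s_step[of n] t_ge2[of n] assms(1) by simp
qed

definition Om :: "(nat \<Rightarrow> int) set" where
  "Om = {w. \<forall>n\<ge>1. w n \<in> C n}"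

lemma Om_mono: assumes w: "w \<in> Om" and i: "1 \<le> i" and ij: "i \<le> j" shows "w i \<le> w j"
  using ij
proof (induction j rule: dec_induct)
  case base then show ?case by simp
next
  case (step n)
  have "w n + 1 \<le> w (Suc n)" using w i step.hyps
    by (intro C_step[of n]) (auto simp: Om_def)
  then show ?case using step by simp
qed

lemma Om_strict: "w \<in> Om \<Longrightarrow> 1 \<le> i \<Longrightarrow> w i + 1 \<le> w (Suc i)"
  by (intro C_step) (auto simp: Om_def)

lemma Om_ge3: "w \<in> Om \<Longrightarrow> 1 \<le> i \<Longrightarrow> w i \<ge> 3"
  by (intro C_ge3) (auto simp: Om_def)

definition St :: "(nat \<Rightarrow> int) \<Rightarrow> nat \<Rightarrow> real" where
  "St w k = esum (\<lambda>m. of_int (w (k + 1 + m)))"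

definition pi :: "(nat \<Rightarrow> int) \<Rightarrow> real" where
  "pi w = St w 0"

lemma St_ge2: "w \<in> Om \<Longrightarrow> (of_int (w (k + 1 + j)) :: real) \<ge> 2"
  using Om_ge3[of w "k+1+j"] by simp

lemma St_rec: "w \<in> Om \<Longrightarrow> St w k * of_int (w (Suc k)) = 1 + St w (Suc k)"
proof -
  assume w: "w \<in> Om"
  have "St w k = (1 + esum (\<lambda>m. of_int (w (k + 1 + Suc m)))) / of_int (w (k + 1 + 0))"
    unfolding St_def by (rule esum_rec) (rule St_ge2[OF w])
  moreover have "(\<lambda>m. of_int (w (k + 1 + Suc m)) :: real) = (\<lambda>m. of_int (w (Suc k + 1 + m)))"
    by simp
  moreover have "(of_int (w (Suc k)) :: real) \<noteq> 0" using Om_ge3[OF w, of "Suc k"] by simp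
  ultimately show ?thesis by (simp add: St_def)
qed

lemma St_pos: "w \<in> Om \<Longrightarrow> St w k > 0"
  unfolding St_def by (rule esum_pos) (rule St_ge2)

lemma St_upper: "w \<in> Om \<Longrightarrow> St w k \<le> 1 / (of_int (w (Suc k)) - 1)"
proof -
  assume w: "w \<in> Om"
  have "St w k \<le> 1 / (of_int (w (k + 1 + 0)) - 1)"
    unfolding St_def
  proof (rule esum_upper)
    show "2 \<le> (of_int (w (k + 1 + j)) :: real)" for j by (rule St_ge2[OF w])
    show "(of_int (w (k + 1 + 0)) :: real) \<le> of_int (w (k + 1 + j))" for j
      using Om_mono[OF w, of "k+1+0" "k+1+j"] by simp
  qed
  then show ?thesis by simp
qed

lemma St_lower: "w \<in> Om \<Longrightarrow> St w k > 1 / of_int (w (Suc k))"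
proof -
  assume w: "w \<in> Om"
  have a: "(of_int (w (Suc k)) :: real) \<ge> 3" using Om_ge3[OF w, of "Suc k"] by simp
  have "St w k * of_int (w (Suc k)) > 1" using St_rec[OF w, of k] St_pos[OF w, of "Suc k"] by simp
  then show ?thesis using a by (simp add: divide_simps)
qed

lemma St_upper2: "w \<in> Om \<Longrightarrow> St w k \<le> (of_int (w (Suc k)) + 1) / (of_int (w (Suc k)))^2"
proof -
  assume w: "w \<in> Om"
  define a where "a = (of_int (w (Suc k)) :: real)"
  define b where "b = (of_int (w (Suc (Suc k))) :: real)"
  have a3: "a \<ge> 3" using Om_ge3[OF w, of "Suc k"] by (simp add: a_def)
  have ab: "a + 1 \<le> b" using Om_strict[OF w, of "Suc k"] by (simp add: a_def b_def)
  have u: "St w (Suc k) \<le> 1 / (b - 1)" using St_upper[OF w, of "Suc k"] by (simp add: b_def)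
  have "1 / (b - 1) \<le> 1 / a" using ab a3 by (intro divide_left_mono) auto
  with u have u2: "St w (Suc k) \<le> 1 / a" by linarith
  have r: "St w k * a = 1 + St w (Suc k)" using St_rec[OF w, of k] by (simp add: a_def)
  have "St w k * a \<le> 1 + 1 / a" using r u2 by linarith
  then have "St w k \<le> (1 + 1/a) / a" using a3 by (simp add: divide_simps)
  also have "(1 + 1/a) / a = (a + 1) / a^2" using a3 by (simp add: field_simps power2_eq_square)
  finally show ?thesis by (simp add: a_def)
qed

lemma St_upper3: "w \<in> Om \<Longrightarrow> St w k < 1 / (of_int (w (Suc k)) - 1)"
proof -
  assume w: "w \<in> Om"
  define a where "a = (of_int (w (Suc k)) :: real)"
  have a3: "a \<ge> 3" using Om_ge3[OF w, of "Suc k"] by (simp add: a_def)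
  have "(a + 1) / a^2 < 1 / (a - 1)"
    using a3 by (simp add: divide_simps power2_eq_square) (simp add: algebra_simps)
  then show ?thesis using St_upper2[OF w, of k] by (simp add: a_def)
qed

end



context eng begin

lemma St_lt1: "w \<in> Om \<Longrightarrow> St w k < 1"
proof -
  assume w: "w \<in> Om"
  have a: "(of_int (w (Suc k)) :: real) \<ge> 3" using Om_ge3[OF w, of "Suc k"] by simp
  have "1 / (of_int (w (Suc k)) - 1) \<le> (1::real) / 2" using a by (intro divide_left_mono) auto
  then show ?thesis using St_upper3[OF w, of k] by linarith
qed

lemma ceil_St: "w \<in> Om \<Longrightarrow> \<lceil>1 / St w k\<rceil> = w (Suc k)"
proof -
  assume w: "w \<in> Om"
  define a where "a = (of_int (w (Suc k)) :: real)"
  have a3: "a \<ge> 3" using Om_ge3[OF w, of "Suc k"] by (simp add: a_def)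
  have p: "St w k > 0" by (rule St_pos[OF w])
  have l: "St w k > 1 / a" using St_lower[OF w, of k] by (simp add: a_def)
  have u: "St w k < 1 / (a - 1)" using St_upper3[OF w, of k] by (simp add: a_def)
  have "1 / St w k < a" using l p a3 by (simp add: divide_simps mult.commute)
  moreover have "1 / St w k > a - 1" using u p a3 by (simp add: divide_simps mult.commute)
  ultimately show ?thesis by (intro ceiling_unique) (auto simp: a_def)
qed

lemma T_St: "w \<in> Om \<Longrightarrow> engel_T (St w k) = St w (Suc k)"
proof -
  assume w: "w \<in> Om"
  have "St w k \<noteq> 0" using St_pos[OF w, of k] by simp
  then have "engel_T (St w k) = St w k * of_int (w (Suc k)) - 1"
    by (simp add: engel_T_def ceil_St[OF w])
  then show ?thesis using St_rec[OF w, of k] by simp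
qed

lemma T_iter: "w \<in> Om \<Longrightarrow> (engel_T ^^ k) (pi w) = St w k"
  by (induction k) (simp_all add: pi_def T_St)

lemma digit_pi: "w \<in> Om \<Longrightarrow> 1 \<le> n \<Longrightarrow> engel_digit n (pi w) = w n"
proof -
  assume w: "w \<in> Om" and n: "1 \<le> n"
  then obtain k where k: "n = Suc k" by (cases n) auto
  show ?thesis unfolding engel_digit_def k using ceil_St[OF w, of k] T_iter[OF w, of k] by simp
qed

lemma pi_identity: "w \<in> Om \<Longrightarrow> of_int (Dp w n) * pi w = of_int (Rr w n) + St w n"
  using Rr_identity[of n "St w" w] St_rec[of w] by (simp add: pi_def)

lemma s_big: "\<exists>n. s (Suc n) \<ge> B"
proof -
  have "eventually (\<lambda>n. s n \<ge> B) sequentially" using h3 unfolding filterlim_at_top by auto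
  then obtain N where "\<forall>n\<ge>N. s n \<ge> B" unfolding eventually_sequentially by auto
  then have "s (Suc N) \<ge> B" by simp
  then show ?thesis by blast
qed

lemma pi_irrational: assumes w: "w \<in> Om" shows "pi w \<notin> \<rat>"
proof
  assume "pi w \<in> \<rat>"
  then obtain p :: int and q :: nat where q: "q > 0" and pq: "pi w = of_int p / real q"
    unfolding Rats_eq_int_div_nat by auto
  obtain n where sn: "s (Suc n) \<ge> real q + 2" using s_big by blast
  have a: "(of_int (w (Suc n)) :: real) > real q + 2"
    using C_gt[of "w (Suc n)" "Suc n"] w sn by (auto simp: Om_def)
  have id: "of_int (Dp w n) * pi w = of_int (Rr w n) + St w n" by (rule pi_identity[OF w])
  have "real q * St w n = of_int (Dp w n * p - int q * Rr w n)"
    using id q unfolding pq by (simp add: field_simps)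
  then obtain z :: int where z: "real q * St w n = of_int z" by blast
  have "real q * St w n > 0" using q St_pos[OF w, of n] by simp
  moreover have "real q * St w n < 1"
  proof -
    have "St w n < 1 / (of_int (w (Suc n)) - 1)" by (rule St_upper3[OF w])
    also have "\<dots> \<le> 1 / (real q + 1)" using a by (intro divide_left_mono) auto
    finally have "real q * St w n < real q * (1 / (real q + 1))" using q by (intro mult_strict_left_mono) auto
    also have "\<dots> < 1" by (simp add: field_simps)
    finally show ?thesis .
  qed
  ultimately have "0 < z" "z < 1" unfolding z by simp_all
  then show False by simp
qed

lemma pi_in_E: assumes w: "w \<in> Om" shows "pi w \<in> engel_set s t"
proof -
  have "0 < pi w" "pi w < 1" using St_pos[OF w, of 0] St_lt1[OF w, of 0] by (simp_all add: pi_def)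
  moreover have "pi w \<notin> \<rat>" by (rule pi_irrational[OF w])
  moreover have "\<forall>n\<ge>1. s n < of_int (engel_digit n (pi w)) \<and> of_int (engel_digit n (pi w)) \<le> s n + t n"
    using w by (auto simp: digit_pi Om_def C_iff)
  ultimately show ?thesis unfolding engel_set_def by auto
qed


definition P :: "nat \<Rightarrow> real" where "P n = (\<Prod>k\<in>{1..n}. s k)"

lemma P_pos: "P n > 0" unfolding P_def by (rule prod_pos) (simp add: s_pos)

lemma P_Suc: "P (Suc n) = P n * s (Suc n)"
  unfolding P_def by (simp add: prod.nat_ivl_Suc' mult.commute)

lemma Dp_pos: "w \<in> Om \<Longrightarrow> (of_int (Dp w n) :: real) > 0"
  unfolding Dp_def of_int_prod by (rule prod_pos) (use Om_ge3 in force)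

lemma Dp_upper: "w \<in> Om \<Longrightarrow> (of_int (Dp w n) :: real) \<le> 2^n * P n"
proof -
  assume w: "w \<in> Om"
  have "(of_int (Dp w n) :: real) = (\<Prod>k\<in>{1..n}. of_int (w k))" by (simp add: Dp_def)
  also have "\<dots> \<le> (\<Prod>k\<in>{1..n}. 2 * s k)"
  proof (rule prod_mono)
    fix k assume k: "k \<in> {1..n}"
    have "w k \<in> C k" using w k by (auto simp: Om_def)
    then show "0 \<le> (of_int (w k) :: real) \<and> of_int (w k) \<le> 2 * s k"
      using C_le[of k "w k"] C_ge3[of k "w k"] k by auto
  qed
  also have "\<dots> = 2^n * P n" by (simp add: P_def prod.distrib)
  finally show ?thesis .
qed

lemma pi_diff:
  assumes w: "w \<in> Om" and v: "v \<in> Om" and agree: "\<And>k. 1 \<le> k \<Longrightarrow> k \<le> n \<Longrightarrow> w k = v k"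
  shows "pi w - pi v = (St w n - St v n) / of_int (Dp w n)"
proof -
  have d: "Dp w n = Dp v n" by (rule Dp_cong[OF agree])
  have r: "Rr w n = Rr v n" by (rule Rr_cong[OF agree])
  have pw: "(of_int (Dp w n) :: real) > 0" by (rule Dp_pos[OF w])
  have "of_int (Dp w n) * (pi w - pi v) = St w n - St v n"
    using pi_identity[OF w, of n] pi_identity[OF v, of n] d r by (simp add: algebra_simps)
  then show ?thesis using pw by (simp add: field_simps)
qed

lemma St_gap:
  assumes w: "w \<in> Om" and v: "v \<in> Om" and lt: "w (Suc n) < v (Suc n)"
  shows "St w n - St v n > 1 / (4 * s (Suc n) * s (Suc (Suc n)))"
proof -
  define a where "a = (of_int (w (Suc n)) :: real)"
  define b where "b = (of_int (v (Suc n)) :: real)"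
  define c where "c = (of_int (w (Suc (Suc n))) :: real)"
  have a3: "a \<ge> 3" using Om_ge3[OF w, of "Suc n"] by (simp add: a_def)
  have ab: "a + 1 \<le> b" using lt by (simp add: a_def b_def)
  have a_le: "a \<le> 2 * s (Suc n)" using C_le[of "Suc n" "w (Suc n)"] w by (auto simp: a_def Om_def)
  have c_le: "c \<le> 2 * s (Suc (Suc n))" using C_le[of "Suc (Suc n)" "w (Suc (Suc n))"] w by (auto simp: c_def Om_def)
  have c3: "c \<ge> 3" using Om_ge3[OF w, of "Suc (Suc n)"] by (simp add: c_def)
  have s1: "s (Suc n) > 0" "s (Suc (Suc n)) > 0" using s_pos by auto
  have lw: "St w (Suc n) > 1 / c" using St_lower[OF w, of "Suc n"] by (simp add: c_def)
  have "1 / c \<ge> 1 / (2 * s (Suc (Suc n)))" using c_le c3 by (intro divide_left_mono) auto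
  with lw have lw2: "St w (Suc n) > 1 / (2 * s (Suc (Suc n)))" by linarith
  have rw: "St w n * a = 1 + St w (Suc n)" using St_rec[OF w, of n] by (simp add: a_def)
  have e1: "St w n = (1 + St w (Suc n)) / a" using rw a3 by (simp add: field_simps)
  have uv: "St v n \<le> (b + 1) / b^2" using St_upper2[OF v, of n] by (simp add: b_def)
  have "(b + 1) / b^2 \<le> 1 / a"
  proof -
    have "b * 1 \<le> b * (b - a)" using ab a3 by (intro mult_left_mono) auto
    then have "a * (b + 1) \<le> b^2" using ab a3 by (simp add: power2_eq_square algebra_simps)
    then show ?thesis using a3 ab by (simp add: divide_simps mult.commute)
  qed
  with uv have uv2: "St v n \<le> 1 / a" by linarith
  have "St w n - St v n \<ge> (1 + St w (Suc n)) / a - 1 / a" using e1 uv2 by linarith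
  also have "(1 + St w (Suc n)) / a - 1 / a = St w (Suc n) / a" using a3 by (simp add: field_simps)
  finally have g: "St w n - St v n \<ge> St w (Suc n) / a" .
  have h1: "St w (Suc n) / a > (1 / (2 * s (Suc (Suc n)))) / a"
    using lw2 a3 by (intro divide_strict_right_mono) auto
  have h2: "(1 / (2 * s (Suc (Suc n)))) / a \<ge> (1 / (2 * s (Suc (Suc n)))) / (2 * s (Suc n))"
    using a_le a3 s1 by (intro divide_left_mono) auto
  have h3: "(1 / (2 * s (Suc (Suc n)))) / (2 * s (Suc n)) = 1 / (4 * s (Suc n) * s (Suc (Suc n)))"
    by (simp add: field_simps)
  show ?thesis using g h1 h2 h3 by linarith
qed

lemma St_spread:
  assumes w: "w \<in> Om" and v: "v \<in> Om" and lt: "w (Suc n) < v (Suc n)"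
  shows "of_int (v (Suc n) - w (Suc n)) - 1 \<le> 4 * s (Suc n)^2 * (St w n - St v n)"
proof -
  define a where "a = (of_int (w (Suc n)) :: real)"
  define b where "b = (of_int (v (Suc n)) :: real)"
  have a3: "a \<ge> 3" using Om_ge3[OF w, of "Suc n"] by (simp add: a_def)
  have ab: "a + 1 \<le> b" using lt by (simp add: a_def b_def)
  have a_le: "a \<le> 2 * s (Suc n)" using C_le[of "Suc n" "w (Suc n)"] w by (auto simp: a_def Om_def)
  have b_le: "b \<le> 2 * s (Suc n)" using C_le[of "Suc n" "v (Suc n)"] v by (auto simp: b_def Om_def)
  have lw: "St w n > 1 / a" using St_lower[OF w, of n] by (simp add: a_def)
  have uv: "St v n < 1 / (b - 1)" using St_upper3[OF v, of n] by (simp add: b_def)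
  have d: "St w n - St v n > 1 / a - 1 / (b - 1)" using lw uv by linarith
  have "1 / a - 1 / (b - 1) = (b - 1 - a) / (a * (b - 1))" using a3 ab by (simp add: field_simps)
  then have d2: "(b - 1 - a) < (a * (b - 1)) * (St w n - St v n)"
    using d a3 ab by (simp add: divide_simps mult.commute)
  have "a * (b - 1) \<le> (2 * s (Suc n)) * (2 * s (Suc n))"
    using a_le b_le a3 ab by (intro mult_mono) auto
  moreover have "St w n - St v n \<ge> 0"
  proof -
    have "1 / (b - 1) \<le> 1 / a" using a3 ab by (intro divide_left_mono) auto
    then show ?thesis using d by linarith
  qed
  ultimately have "(a * (b - 1)) * (St w n - St v n) \<le> ((2 * s (Suc n)) * (2 * s (Suc n))) * (St w n - St v n)"
    by (intro mult_right_mono) auto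
  then show ?thesis using d2 by (simp add: a_def b_def power2_eq_square algebra_simps)
qed


definition G :: "nat \<Rightarrow> int set" where "G n = (if n = 0 then {0} else C n)"
definition MM :: "nat \<Rightarrow> int measure" where "MM n = uniform_count_measure (G n)"

lemma G_finite: "finite (G n)" by (simp add: G_def)
lemma G_ne: "G n \<noteq> {}" using C_nonempty[of n] by (cases n) (auto simp: G_def)

lemma MM_prob: "prob_space (MM n)"
  unfolding MM_def by (rule prob_space_uniform_count_measure[OF G_finite G_ne])

lemma PP_loc: "product_prob_space MM"
  unfolding product_prob_space_def product_prob_space_axioms_def product_sigma_finite_def
  using MM_prob prob_space_imp_sigma_finite by blast

sublocale PP: product_prob_space MM UNIV by (rule PP_loc)


abbreviation PM where "PM \<equiv> PiM UNIV MM"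

lemma space_PM: "space PM = {w. \<forall>n. w n \<in> G n}"
  by (auto simp: space_PiM MM_def space_uniform_count_measure PiE_def Pi_def)

lemma space_PM_Om: assumes "w \<in> space PM" shows "w \<in> Om"
  unfolding Om_def
proof (intro CollectI allI impI)
  fix n :: nat assume "1 \<le> n"
  moreover have "w n \<in> G n" using assms by (simp add: space_PM)
  ultimately show "w n \<in> C n" by (simp add: G_def)
qed

definition N :: "nat \<Rightarrow> real" where "N m = (\<Prod>k\<in>{1..m}. real (card (C k)))"

definition Cyl :: "(nat \<Rightarrow> int) \<Rightarrow> nat \<Rightarrow> int set \<Rightarrow> (nat \<Rightarrow> int) set" where
  "Cyl w n A = {v \<in> space PM. \<forall>k\<in>{1..Suc n}. v k \<in> (if k = Suc n then A else {w k})}"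

lemma Cyl_emeasure:
  assumes w: "w \<in> Om" and A: "A \<subseteq> C (Suc n)"
  shows "emeasure PM (Cyl w n A) = (\<Prod>k\<in>{1..Suc n}. emeasure (MM k) (if k = Suc n then A else {w k}))"
  unfolding Cyl_def
proof (rule PP.emeasure_PiM_Collect)
  show "{1..Suc n} \<subseteq> UNIV" "finite {1..Suc n}" by auto
  fix i assume i: "i \<in> {1..Suc n}"
  show "(if i = Suc n then A else {w i}) \<in> sets (MM i)"
    using i A w by (auto simp: MM_def sets_uniform_count_measure G_def Om_def)
qed

lemma Cyl_sets:
  assumes w: "w \<in> Om" and A: "A \<subseteq> C (Suc n)"
  shows "Cyl w n A \<in> sets PM"
  unfolding Cyl_def
proof -
  have "{v \<in> space PM. \<forall>k\<in>{1..Suc n}. v k \<in> (if k = Suc n then A else {w k})}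
      = prod_emb UNIV MM {1..Suc n} (PiE {1..Suc n} (\<lambda>k. if k = Suc n then A else {w k}))"
    by (auto simp: prod_emb_def space_PiM PiE_def Pi_def)
  also have "\<dots> \<in> sets PM"
    using A w by (intro sets_PiM_I) (auto simp: MM_def sets_uniform_count_measure G_def Om_def)
  finally show "{v \<in> space PM. \<forall>k\<in>{1..Suc n}. v k \<in> (if k = Suc n then A else {w k})} \<in> sets PM" .
qed


lemma N_Suc: "N (Suc n) = N n * real (card (C (Suc n)))"
  unfolding N_def by (simp add: prod.nat_ivl_Suc' mult.commute)

lemma card_C_pos: "1 \<le> n \<Longrightarrow> card (C n) > 0"
  using C_nonempty[of n] by (simp add: card_gt_0_iff)

lemma N_pos: "N n > 0"
  unfolding N_def
proof (rule prod_pos)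
  fix i assume "i \<in> {1..n}"
  then have "card (C i) > 0" by (intro card_C_pos) simp
  then show "0 < real (card (C i))" by (simp only: of_nat_0_less_iff)
qed

lemma Cyl_measure:
  assumes w: "w \<in> Om" and A: "A \<subseteq> C (Suc n)"
  shows "emeasure PM (Cyl w n A) = ennreal (real (card A) / N (Suc n))"
proof -
  define X where "X k = (if k = Suc n then A else {w k})" for k
  have XC: "X k \<subseteq> G k" if "k \<in> {1..Suc n}" for k
    using that A w by (auto simp: X_def G_def Om_def)
  have "emeasure PM (Cyl w n A) = (\<Prod>k\<in>{1..Suc n}. emeasure (MM k) (X k))"
    using Cyl_emeasure[OF w A] by (simp add: X_def)
  also have "\<dots> = (\<Prod>k\<in>{1..Suc n}. ennreal (real (card (X k)) / real (card (C k))))"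
  proof (rule prod.cong[OF refl])
    fix k assume k: "k \<in> {1..Suc n}"
    have "emeasure (MM k) (X k) = ennreal (measure (MM k) (X k))"
    proof -
      have fm: "finite_measure (MM k)" using MM_prob[of k] by (simp add: prob_space_def)
      show ?thesis by (rule finite_measure.emeasure_eq_measure[OF fm])
    qed
    also have "measure (MM k) (X k) = real (card (X k)) / real (card (G k))"
      unfolding MM_def by (rule measure_uniform_count_measure[OF G_finite XC[OF k]])
    also have "G k = C k" using k by (simp add: G_def)
    finally show "emeasure (MM k) (X k) = ennreal (real (card (X k)) / real (card (C k)))" .
  qed
  also have "\<dots> = ennreal (\<Prod>k\<in>{1..Suc n}. real (card (X k)) / real (card (C k)))"
    by (rule prod_ennreal) simp
  also have "(\<Prod>k\<in>{1..Suc n}. real (card (X k)) / real (card (C k))) = real (card A) / N (Suc n)"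
  proof -
    have "(\<Prod>k\<in>{1..Suc n}. real (card (X k)) / real (card (C k)))
        = (\<Prod>k\<in>{1..n}. real (card (X k)) / real (card (C k))) * (real (card (X (Suc n))) / real (card (C (Suc n))))"
      by (simp add: prod.nat_ivl_Suc')
    also have "(\<Prod>k\<in>{1..n}. real (card (X k)) / real (card (C k))) = (\<Prod>k\<in>{1..n}. 1 / real (card (C k)))"
      by (rule prod.cong) (auto simp: X_def)
    also have "\<dots> = 1 / N n" by (simp add: N_def prod_dividef)
    finally show ?thesis by (simp add: X_def N_Suc)
  qed
  finally show ?thesis .
qed


definition Num :: "nat \<Rightarrow> real" where "Num n = (\<Sum>k=1..n. ln (t k))"
definition Den :: "nat \<Rightarrow> real" where
  "Den n = (\<Sum>k=1..n+1. ln (s k)) + ln (s (n + 1)) - ln (t (n + 1))"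
definition g :: "nat \<Rightarrow> real" where
  "g n = 1 / (4 * 2^n * P n * s (Suc n) * s (Suc (Suc n)))"
definition K :: "nat \<Rightarrow> real" where
  "K n = 4 * s (Suc n)^2 * 2^n * P n"

lemma s_nz: "1 \<le> n \<Longrightarrow> s n \<noteq> 0" using s_pos[of n] by simp
lemma card_C_rpos: "1 \<le> n \<Longrightarrow> real (card (C n)) > 0"
  by (simp only: of_nat_0_less_iff) (rule card_C_pos)
lemma s_nz': "0 < n \<Longrightarrow> s n \<noteq> 0" using s_nz[of n] by simp
lemma card_C_nz: "1 \<le> n \<Longrightarrow> real (card (C n)) \<noteq> 0" using card_C_rpos[of n] by linarith
lemma card_C_nz': "0 < n \<Longrightarrow> real (card (C n)) \<noteq> 0" using card_C_nz[of n] by simp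

lemma ln_P: "ln (P n) = (\<Sum>k=1..n. ln (s k))"
  unfolding P_def by (rule ln_prod) (auto intro!: s_nz')

lemma ln_N: "ln (N n) \<ge> Num n - n * ln 2"
proof -
  have "ln (N n) = (\<Sum>k=1..n. ln (real (card (C k))))"
    unfolding N_def
  proof (rule ln_prod)
    fix i assume "i \<in> {1..n}"
    then show "real (card (C i)) \<noteq> 0" by (intro card_C_nz) simp
  qed simp
  also have "\<dots> \<ge> (\<Sum>k=1..n. ln (t k) - ln 2)"
  proof (rule sum_mono)
    fix k assume k: "k \<in> {1..n}"
    have "t k / 2 \<le> real (card (C k))" using card_C_bounds(1)[of k] k by simp
    moreover have "t k / 2 > 0" using t_pos[of k] k by simp
    ultimately have "ln (t k / 2) \<le> ln (real (card (C k)))" by simp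
    then show "ln (t k) - ln 2 \<le> ln (real (card (C k)))" using t_pos[of k] k by (simp add: ln_div)
  qed
  also have "(\<Sum>k=1..n. ln (t k) - ln 2) = Num n - n * ln 2" by (simp add: Num_def sum_subtractf)
  finally show ?thesis .
qed

lemma ln_c: "1 \<le> n \<Longrightarrow> ln (real (card (C n))) \<ge> ln (t n) - ln 2"
proof -
  assume k: "1 \<le> n"
  have "t n / 2 \<le> real (card (C n))" using card_C_bounds(1)[of n] k by simp
  moreover have "t n / 2 > 0" using t_pos[of n] k by simp
  ultimately have "ln (t n / 2) \<le> ln (real (card (C n)))" by simp
  then show ?thesis using t_pos[of n] k by (simp add: ln_div)
qed

lemma Den_eq: "Den n = ln (P n) + 2 * ln (s (Suc n)) - ln (t (Suc n))"
  unfolding Den_def ln_P by (simp add: sum.nat_ivl_Suc')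

lemma ln_s_ge_t: "1 \<le> n \<Longrightarrow> ln (t n) \<le> ln (s n)"
  using t_le_s[of n] t_pos[of n] by simp

lemma ln_s_pos: "1 \<le> n \<Longrightarrow> ln (s n) > 0"
  using s_ge2[of n] by simp

lemma ln_P_nonneg: "ln (P n) \<ge> 0"
  unfolding ln_P by (rule sum_nonneg) (use ln_s_pos in force)

lemma Den_ge: "Den n \<ge> ln (P n) + ln (s (Suc n))"
  using Den_eq[of n] ln_s_ge_t[of "Suc n"] by simp

lemma Den_pos: "Den n > 0"
  using Den_ge[of n] ln_P_nonneg[of n] ln_s_pos[of "Suc n"] by simp

lemma Num_nonneg: "Num n \<ge> 0"
  unfolding Num_def by (rule sum_nonneg) (use t_ge2 in force)

lemma Num_le_Den: "Num n \<le> Den n"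
proof -
  have "Num n \<le> ln (P n)" unfolding Num_def ln_P by (rule sum_mono) (simp add: ln_s_ge_t)
  then show ?thesis using Den_ge[of n] ln_s_pos[of "Suc n"] by simp
qed

lemma g_pos: "g n > 0"
  unfolding g_def using P_pos[of n] s_pos[of "Suc n"] s_pos[of "Suc (Suc n)"] by simp

lemma ln_inv_g: "ln (1 / g n) = 2 * ln 2 + n * ln 2 + ln (P n) + ln (s (Suc n)) + ln (s (Suc (Suc n)))"
proof -
  have p: "P n > 0" "s (Suc n) > 0" "s (Suc (Suc n)) > 0" using P_pos s_pos by auto
  have "1 / g n = 4 * 2^n * P n * s (Suc n) * s (Suc (Suc n))" by (simp add: g_def)
  also have "ln \<dots> = ln 4 + ln (2^n) + ln (P n) + ln (s (Suc n)) + ln (s (Suc (Suc n)))"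
    using p by (simp add: ln_mult)
  also have "ln (4::real) = 2 * ln 2"
    using ln_realpow[of 2 2] by simp
  also have "ln ((2::real)^n) = n * ln 2" by (simp add: ln_realpow)
  finally show ?thesis .
qed

lemma I1:
  assumes a: "0 < \<alpha>" "\<alpha> \<le> 1" and a': "\<alpha> < \<alpha>'"
    and Q: "\<alpha>' * Den (Suc n) \<le> Num (Suc n)" "(2 * real (Suc n) + 4) * ln 2 \<le> (\<alpha>' - \<alpha>) * Den (Suc n)"
  shows "1 / N (Suc n) \<le> g n powr \<alpha>"
proof -
  have l2: "ln (2::real) > 0" by simp
  have D: "Den (Suc n) \<ge> ln (P n) + ln (s (Suc n)) + ln (s (Suc (Suc n)))"
    using Den_ge[of "Suc n"] P_pos[of n] s_pos[of "Suc n"] by (simp add: P_Suc ln_mult)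
  have "ln (1 / g n) \<le> Den (Suc n) + (real n + 2) * ln 2" using ln_inv_g[of n] D by (simp add: algebra_simps)
  then have "\<alpha> * ln (1 / g n) \<le> \<alpha> * (Den (Suc n) + (real n + 2) * ln 2)" using a by (intro mult_left_mono) auto
  also have "\<dots> \<le> \<alpha> * Den (Suc n) + (real n + 2) * ln 2"
  proof -
    have "\<alpha> * ((real n + 2) * ln 2) \<le> 1 * ((real n + 2) * ln 2)" using a l2 by (intro mult_right_mono) auto
    then show ?thesis by (simp add: algebra_simps)
  qed
  also have "\<dots> \<le> Num (Suc n) - (Suc n) * ln 2" using Q l2 by (simp add: algebra_simps, linarith)
  also have "\<dots> \<le> ln (N (Suc n))" by (rule ln_N)
  finally have *: "\<alpha> * ln (1 / g n) \<le> ln (N (Suc n))" .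
  have "1 / N (Suc n) = exp (- ln (N (Suc n)))" using N_pos[of "Suc n"] by (simp add: exp_minus inverse_eq_divide)
  also have "\<dots> \<le> exp (\<alpha> * ln (g n))"
    using * g_pos[of n] by (simp add: ln_div)
  also have "\<dots> = g n powr \<alpha>" using g_pos[of n] by (simp add: powr_def mult.commute)
  finally show ?thesis .
qed

lemma I2:
  assumes a: "0 < \<alpha>" "\<alpha> \<le> 1" and a': "\<alpha> < \<alpha>'"
    and Q: "\<alpha>' * Den n \<le> Num n" "(2 * real n + 4) * ln 2 \<le> (\<alpha>' - \<alpha>) * Den n"
  shows "(2 * K n) powr \<alpha> \<le> N n * real (card (C (Suc n))) powr \<alpha>"
proof -
  have l2: "ln (2::real) > 0" by simp
  have p: "P n > 0" "s (Suc n) > 0" using P_pos s_pos by auto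
  have c: "real (card (C (Suc n))) > 0" using card_C_pos[of "Suc n"] by simp
  have lK: "ln (2 * K n) = 3 * ln 2 + n * ln 2 + 2 * ln (s (Suc n)) + ln (P n)"
  proof -
    have "2 * K n = 8 * 2^n * s (Suc n)^2 * P n" by (simp add: K_def)
    also have "ln \<dots> = ln 8 + ln (2^n) + ln (s (Suc n)^2) + ln (P n)" using p by (simp add: ln_mult)
    also have "ln (8::real) = 3 * ln 2" using ln_realpow[of 2 3] by simp
    also have "ln ((2::real)^n) = n * ln 2" by (simp add: ln_realpow)
    also have "ln (s (Suc n)^2) = 2 * ln (s (Suc n))" using p by (simp add: ln_realpow)
    finally show ?thesis .
  qed
  have "ln (2 * K n) - ln (real (card (C (Suc n)))) \<le> Den n + (real n + 4) * ln 2"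
    using lK ln_c[of "Suc n"] Den_eq[of n] by (simp add: algebra_simps)
  then have "\<alpha> * (ln (2 * K n) - ln (real (card (C (Suc n))))) \<le> \<alpha> * (Den n + (real n + 4) * ln 2)"
    using a by (intro mult_left_mono) auto
  also have "\<dots> \<le> \<alpha> * Den n + (real n + 4) * ln 2"
  proof -
    have "\<alpha> * ((real n + 4) * ln 2) \<le> 1 * ((real n + 4) * ln 2)" using a l2 by (intro mult_right_mono) auto
    then show ?thesis by (simp add: algebra_simps)
  qed
  also have "\<dots> \<le> Num n - n * ln 2"
  proof -
    have e1: "(\<alpha>' - \<alpha>) * Den n = \<alpha>' * Den n - \<alpha> * Den n" by (simp add: algebra_simps)
    have e2: "(2 * real n + 4) * ln 2 = 2 * (real n * ln 2) + 4 * ln 2" by (simp add: algebra_simps)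
    have e3: "(real n + 4) * ln 2 = real n * ln 2 + 4 * ln 2" by (simp add: algebra_simps)
    have Q2: "2 * (real n * ln 2) + 4 * ln 2 \<le> \<alpha>' * Den n - \<alpha> * Den n" using Q(2) e1 e2 by simp
    have nn: "real n * ln 2 \<ge> 0" by simp
    show ?thesis unfolding e3 using Q(1) Q2 l2 nn by linarith
  qed
  also have "\<dots> \<le> ln (N n)" by (rule ln_N)
  finally have *: "\<alpha> * ln (2 * K n) \<le> ln (N n) + \<alpha> * ln (real (card (C (Suc n))))"
    by (simp add: algebra_simps)
  have Kp: "2 * K n > 0" using p by (simp add: K_def)
  have "(2 * K n) powr \<alpha> = exp (\<alpha> * ln (2 * K n))" using Kp by (simp add: powr_def mult.commute)
  also have "\<dots> \<le> exp (ln (N n) + \<alpha> * ln (real (card (C (Suc n)))))" using * by simp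
  also have "\<dots> = N n * real (card (C (Suc n))) powr \<alpha>"
    using N_pos[of n] c C_nonempty[of "Suc n"] by (simp add: exp_add powr_def mult.commute)
  finally show ?thesis .
qed


lemma interp:
  fixes x c y \<alpha> :: real
  assumes "0 \<le> x" "x \<le> c" "x \<le> y" "0 < c" "0 < y" "0 \<le> \<alpha>" "\<alpha> \<le> 1"
  shows "x \<le> c powr (1 - \<alpha>) * y powr \<alpha>"
proof (cases "x = 0")
  case True then show ?thesis by simp
next
  case False
  then have xp: "x > 0" using assms by simp
  have "x = x powr (1 - \<alpha>) * x powr \<alpha>" using xp by (simp add: powr_add[symmetric])
  also have "\<dots> \<le> c powr (1 - \<alpha>) * y powr \<alpha>"
    using assms xp by (intro mult_mono powr_mono2) auto
  finally show ?thesis .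
qed

lemma NL:
  assumes a: "0 < \<alpha>" "\<alpha> < 1" and a': "\<alpha> < \<alpha>'"
    and Q0: "\<alpha>' * Den n \<le> Num n" "(2 * real n + 4) * ln 2 \<le> (\<alpha>' - \<alpha>) * Den n"
    and Q1: "\<alpha>' * Den (Suc n) \<le> Num (Suc n)" "(2 * real (Suc n) + 4) * ln 2 \<le> (\<alpha>' - \<alpha>) * Den (Suc n)"
    and r: "g n \<le> r" and x: "0 \<le> x" "x \<le> real (card (C (Suc n)))" "x \<le> K n * r + 2"
  shows "x / N (Suc n) \<le> 4 * r powr \<alpha>"
proof -
  have Np: "N (Suc n) > 0" "N n > 0" using N_pos by auto
  have gp: "g n > 0" by (rule g_pos)
  have rp: "r > 0" using gp r by linarith
  have Kp: "K n > 0" unfolding K_def using P_pos[of n] s_pos[of "Suc n"] by simp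
  have c: "real (card (C (Suc n))) > 0" by (rule card_C_rpos) simp
  show ?thesis
  proof (cases "K n * r \<le> 2")
    case True
    then have x4: "x \<le> 4" using x by linarith
    have "x / N (Suc n) \<le> 4 / N (Suc n)" using x4 Np by (intro divide_right_mono) auto
    also have "\<dots> = 4 * (1 / N (Suc n))" by simp
    also have "\<dots> \<le> 4 * g n powr \<alpha>"
      using I1[OF _ _ a' Q1] a by simp
    also have "\<dots> \<le> 4 * r powr \<alpha>" using r gp a by (simp add: powr_mono2)
    finally show ?thesis .
  next
    case False
    let ?c = "real (card (C (Suc n)))"
    have x2: "x \<le> 2 * K n * r" using x False by linarith
    have "x \<le> ?c powr (1 - \<alpha>) * (2 * K n * r) powr \<alpha>"
      using x x2 c Kp rp a by (intro interp) auto
    then have "x / N (Suc n) \<le> ?c powr (1 - \<alpha>) * (2 * K n * r) powr \<alpha> / N (Suc n)"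
      using Np by (intro divide_right_mono) auto
    also have "?c powr (1 - \<alpha>) * (2 * K n * r) powr \<alpha> / N (Suc n)
        = (2 * K n) powr \<alpha> * r powr \<alpha> / (N n * ?c powr \<alpha>)"
    proof -
      have "?c powr (1 - \<alpha>) = ?c / ?c powr \<alpha>" using c by (simp add: powr_diff)
      moreover have "(2 * K n * r) powr \<alpha> = (2 * K n) powr \<alpha> * r powr \<alpha>"
        using Kp rp by (simp add: powr_mult)
      moreover have "N (Suc n) = N n * ?c" by (rule N_Suc)
      ultimately show ?thesis using c Np by (simp add: field_simps)
    qed
    also have "\<dots> \<le> (N n * ?c powr \<alpha>) * r powr \<alpha> / (N n * ?c powr \<alpha>)"
      using I2[OF _ _ a' Q0] a c Np rp by (intro divide_right_mono mult_right_mono) auto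
    also have "\<dots> = r powr \<alpha>" using c Np C_nonempty[of "Suc n"] by simp
    also have "\<dots> \<le> 4 * r powr \<alpha>" by simp
    finally show ?thesis .
  qed
qed

lemma g_Suc_le: "g (Suc n) \<le> g n"
proof -
  have p: "P n > 0" "s (Suc n) > 0" "s (Suc (Suc n)) > 0" "s (Suc (Suc (Suc n))) \<ge> 2"
    using P_pos s_pos s_ge2 by auto
  have "4 * 2^n * P n * s (Suc n) * s (Suc (Suc n)) * 1
      \<le> 4 * 2^n * P n * s (Suc n) * s (Suc (Suc n)) * (2 * s (Suc (Suc (Suc n))))"
    using p by (intro mult_left_mono) auto
  then have "4 * 2^n * P n * s (Suc n) * s (Suc (Suc n))
      \<le> 4 * 2^(Suc n) * P (Suc n) * s (Suc (Suc n)) * s (Suc (Suc (Suc n)))"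
    by (simp add: P_Suc algebra_simps)
  moreover have "0 < 4 * 2^n * P n * s (Suc n) * s (Suc (Suc n))" using p by simp
  ultimately show ?thesis unfolding g_def using p P_pos[of "Suc n"]
    by (intro divide_left_mono mult_pos_pos) auto
qed

lemma g_antimono: "m \<le> n \<Longrightarrow> g n \<le> g m"
  using g_Suc_le by (rule antimono_iff_le_Suc[THEN iffD2, unfolded antimono_def, rule_format])


lemma card_C_ge2: assumes "1 \<le> n" shows "card (C n) \<ge> 2"
proof -
  have "t n / 2 \<le> real (card (C n))" using card_C_bounds(1)[OF assms] .
  moreover have "t n \<ge> 2" using t_ge2[OF assms] .
  ultimately have "real (card (C n)) \<ge> 1" by linarith
  moreover have "card (C n) = nat (\<lfloor>s n + t n\<rfloor> - \<lfloor>s n\<rfloor>)" by (rule card_C)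
  moreover have "\<lfloor>s n + t n\<rfloor> - \<lfloor>s n\<rfloor> \<ge> 2"
  proof -
    have "of_int \<lfloor>s n + t n\<rfloor> > s n + t n - 1" "of_int \<lfloor>s n\<rfloor> \<le> s n" by linarith+
    then have "of_int (\<lfloor>s n + t n\<rfloor> - \<lfloor>s n\<rfloor>) > t n - 1" unfolding of_int_diff by linarith
    then have "of_int (\<lfloor>s n + t n\<rfloor> - \<lfloor>s n\<rfloor>) > (1::real)" using t_ge2[OF assms] by linarith
    then show ?thesis by linarith
  qed
  ultimately show ?thesis by linarith
qed

lemma N_ge_pow: "N m \<ge> 2^m"
proof (induction m)
  case 0 then show ?case by (simp add: N_def)
next
  case (Suc m)
  have "real (card (C (Suc m))) \<ge> 2" using card_C_ge2[of "Suc m"] by simp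
  then have "N m * 2 \<le> N (Suc m)" unfolding N_Suc using N_pos[of m] by (intro mult_left_mono) auto
  then show ?case using Suc by simp
qed

lemma N_large: "\<eta> > 0 \<Longrightarrow> \<exists>m. 1 / N (Suc m) \<le> \<eta>"
proof -
  assume e: "\<eta> > 0"
  obtain m :: nat where m: "1 / \<eta> < real m" using reals_Archimedean2 by blast
  have "m < 2 ^ m" by (rule less_exp)
  then have "real m < real (2 ^ m)" by (simp only: of_nat_less_iff)
  then have "real m < 2 ^ m" by simp
  also have "\<dots> \<le> 2 ^ Suc m" by simp
  also have "\<dots> \<le> N (Suc m)" by (rule N_ge_pow)
  finally have "1 / \<eta> < N (Suc m)" using m by linarith
  then have "1 / N (Suc m) < \<eta>" using e N_pos[of "Suc m"] by (simp add: field_simps)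
  then show ?thesis by (intro exI[of _ m]) simp
qed

lemma space_PM_0: assumes "w \<in> space PM" shows "w 0 = 0"
proof -
  have "w 0 \<in> G 0" using assms by (simp add: space_PM)
  then show ?thesis by (simp add: G_def)
qed

lemma mass:
  assumes a: "0 < \<alpha>" "\<alpha> < 1" "\<alpha> < \<alpha>'"
    and Qall: "\<forall>m\<ge>n0. \<alpha>' * Den m \<le> Num m \<and> (2 * real m + 4) * ln 2 \<le> (\<alpha>' - \<alpha>) * Den m"
    and U: "bounded U" "diameter U < g n0" and e: "\<eta> > 0"
  shows "\<exists>S\<in>sets PM. {w \<in> space PM. pi w \<in> U} \<subseteq> S \<and> emeasure PM S \<le> ennreal (4 * diameter U powr \<alpha> + \<eta>)"
proof -
  define pre where "pre = {w \<in> space PM. pi w \<in> U}"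
  define r where "r = diameter U"
  have pre_Om: "w \<in> Om" if "w \<in> pre" for w using that space_PM_Om by (auto simp: pre_def)
  have dist: "\<bar>pi w - pi v\<bar> \<le> r" if "w \<in> pre" "v \<in> pre" for w v
    using diameter_bounded_bound[OF U(1), of "pi w" "pi v"] that by (auto simp: pre_def r_def dist_real_def)
  have r0: "r \<ge> 0" unfolding r_def by (rule diameter_ge_0[OF U(1)])
  have rpow: "r powr \<alpha> \<ge> 0" by simp
  show ?thesis
  proof (cases "\<exists>w\<in>pre. \<exists>v\<in>pre. \<exists>k. w k \<noteq> v k")
    case False
    show ?thesis
    proof (cases "pre = {}")
      case True
      then show ?thesis unfolding pre_def by (intro bexI[of _ "{}"]) auto
    next
      case ne: False
      then obtain w0 where w0: "w0 \<in> pre" by blast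
      have single: "pre \<subseteq> {w0}" using False w0 by (auto simp: fun_eq_iff)
      obtain m where m: "1 / N (Suc m) \<le> \<eta>" using N_large[OF e] by blast
      have wO: "w0 \<in> Om" by (rule pre_Om[OF w0])
      have A: "{w0 (Suc m)} \<subseteq> C (Suc m)" using wO by (auto simp: Om_def)
      have sub: "pre \<subseteq> Cyl w0 m {w0 (Suc m)}"
        using single w0 by (auto simp: Cyl_def pre_def)
      have "emeasure PM (Cyl w0 m {w0 (Suc m)}) = ennreal (1 / N (Suc m))"
        using Cyl_measure[OF wO A] by simp
      also have "\<dots> \<le> ennreal (4 * diameter U powr \<alpha> + \<eta>)"
      proof (rule ennreal_leI)
        show "1 / N (Suc m) \<le> 4 * diameter U powr \<alpha> + \<eta>" using m rpow unfolding r_def by linarith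
      qed
      finally show ?thesis using Cyl_sets[OF wO A] sub unfolding pre_def by blast
    qed
  next
    case True
    define n where "n = (LEAST m. \<exists>w\<in>pre. \<exists>v\<in>pre. w (Suc m) \<noteq> v (Suc m))"
    have ex: "\<exists>m. \<exists>w\<in>pre. \<exists>v\<in>pre. w (Suc m) \<noteq> v (Suc m)"
    proof -
      obtain w v k where wv: "w \<in> pre" "v \<in> pre" "w k \<noteq> v k" using True by blast
      have "k \<noteq> 0"
      proof
        assume "k = 0"
        moreover have "w 0 = 0" "v 0 = 0" using wv(1,2) space_PM_0 by (auto simp: pre_def)
        ultimately show False using wv(3) by simp
      qed
      then obtain m where "k = Suc m" by (cases k) auto
      then show ?thesis using wv by blast
    qed
    have agree: "w j = v j" if hh: "w \<in> pre" "v \<in> pre" "1 \<le> j" "j \<le> n" for w v j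
    proof (rule ccontr)
      assume ne: "w j \<noteq> v j"
      obtain m where m: "j = Suc m" using hh(3) by (cases j) auto
      have "m < n" using m hh(4) by simp
      moreover have "\<exists>w\<in>pre. \<exists>v\<in>pre. w (Suc m) \<noteq> v (Suc m)" using ne hh m by blast
      ultimately show False using not_less_Least[of m] unfolding n_def by blast
    qed
    have exn: "\<exists>w\<in>pre. \<exists>v\<in>pre. w (Suc n) \<noteq> v (Suc n)"
      unfolding n_def by (rule LeastI_ex[OF ex])
    define A where "A = (\<lambda>w. w (Suc n)) ` pre"
    have AC: "A \<subseteq> C (Suc n)" using pre_Om by (auto simp: A_def Om_def)
    have Afin: "finite A" by (rule finite_subset[OF AC C_finite])
    have imgA: "\<And>a. a \<in> A \<Longrightarrow> \<exists>w\<in>pre. w (Suc n) = a" unfolding A_def by blast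
    obtain w1 v1 where w1v1: "w1 \<in> pre" "v1 \<in> pre" "w1 (Suc n) \<noteq> v1 (Suc n)" using exn by blast
    have Ane: "A \<noteq> {}" using w1v1 unfolding A_def by blast
    obtain u1 where u1: "u1 \<in> pre" "u1 (Suc n) = Min A"
      using imgA[OF Min_in[OF Afin Ane]] by blast
    obtain u2 where u2: "u2 \<in> pre" "u2 (Suc n) = Max A"
      using imgA[OF Max_in[OF Afin Ane]] by blast
    have lt: "u1 (Suc n) < u2 (Suc n)"
    proof -
      have inA: "w1 (Suc n) \<in> A" "v1 (Suc n) \<in> A" using w1v1 unfolding A_def by blast+
      have "Min A \<le> w1 (Suc n)" "w1 (Suc n) \<le> Max A" "Min A \<le> v1 (Suc n)" "v1 (Suc n) \<le> Max A"
        using Min_le[OF Afin inA(1)] Min_le[OF Afin inA(2)] Max_ge[OF Afin inA(1)] Max_ge[OF Afin inA(2)] by auto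
      then show ?thesis using u1 u2 w1v1(3) by linarith
    qed
    have u1O: "u1 \<in> Om" and u2O: "u2 \<in> Om" using pre_Om u1 u2 by auto
    have ag12: "\<And>k. 1 \<le> k \<Longrightarrow> k \<le> n \<Longrightarrow> u1 k = u2 k" using agree u1 u2 by blast
    have pd: "pi u1 - pi u2 = (St u1 n - St u2 n) / of_int (Dp u1 n)" by (rule pi_diff[OF u1O u2O ag12])
    have Dpos: "(of_int (Dp u1 n) :: real) > 0" by (rule Dp_pos[OF u1O])
    have Dup: "(of_int (Dp u1 n) :: real) \<le> 2^n * P n" by (rule Dp_upper[OF u1O])
    have dd: "pi u1 - pi u2 \<le> r" using dist[OF u1(1) u2(1)] by linarith
    have Sdiff: "St u1 n - St u2 n = of_int (Dp u1 n) * (pi u1 - pi u2)" using pd Dpos by simp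
    have sp: "s (Suc n) > 0" "s (Suc (Suc n)) > 0" using s_pos by auto
    have G0: "St u1 n - St u2 n > 1 / (4 * s (Suc n) * s (Suc (Suc n)))" by (rule St_gap[OF u1O u2O lt])
    have "1 / (4 * s (Suc n) * s (Suc (Suc n))) > 0" using sp by simp
    then have Spos: "St u1 n - St u2 n > 0" using G0 by linarith
    have pipos: "pi u1 - pi u2 > 0" unfolding pd using Spos Dpos by (rule divide_pos_pos)
    have gap: "g n \<le> r"
    proof -
      have "St u1 n - St u2 n \<le> 2^n * P n * (pi u1 - pi u2)"
      proof -
        have "pi u1 - pi u2 \<ge> 0" using pipos by simp
        then show ?thesis unfolding Sdiff using Dup by (intro mult_right_mono) auto
      qed
      with G0 have "1 / (4 * s (Suc n) * s (Suc (Suc n))) < 2^n * P n * (pi u1 - pi u2)" by linarith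
      then have "1 / (4 * s (Suc n) * s (Suc (Suc n))) / (2^n * P n) < pi u1 - pi u2"
      proof -
        assume h: "1 / (4 * s (Suc n) * s (Suc (Suc n))) < 2^n * P n * (pi u1 - pi u2)"
        have pP: "2^n * P n > 0" using P_pos[of n] by simp
        have "(pi u1 - pi u2) * (2^n * P n) = 2^n * P n * (pi u1 - pi u2)" by simp
        then show ?thesis using h by (subst pos_divide_less_eq[OF pP]) linarith
      qed
      moreover have "1 / (4 * s (Suc n) * s (Suc (Suc n))) / (2^n * P n) = g n"
        by (simp add: g_def field_simps)
      ultimately show ?thesis using dd by linarith
    qed
    have nn0: "n0 \<le> n"
    proof (rule ccontr)
      assume "\<not> n0 \<le> n"
      then have "g n0 \<le> g n" by (intro g_antimono) simp
      then show False using gap U(2) r_def by linarith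
    qed
    have spread: "real (card A) \<le> K n * r + 2"
    proof -
      have sp1: "of_int (u2 (Suc n) - u1 (Suc n)) - 1 \<le> 4 * s (Suc n)^2 * (St u1 n - St u2 n)"
        by (rule St_spread[OF u1O u2O lt])
      have "St u1 n - St u2 n \<le> 2^n * P n * r"
      proof -
        have "St u1 n - St u2 n \<le> 2^n * P n * (pi u1 - pi u2)"
        proof -
          have "pi u1 - pi u2 \<ge> 0" using pipos by simp
          then show ?thesis unfolding Sdiff using Dup by (intro mult_right_mono) auto
        qed
        also have "\<dots> \<le> 2^n * P n * r" using dd P_pos[of n] by (intro mult_left_mono) auto
        finally show ?thesis .
      qed
      then have "4 * s (Suc n)^2 * (St u1 n - St u2 n) \<le> 4 * s (Suc n)^2 * (2^n * P n * r)"
        by (intro mult_left_mono) auto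
      with sp1 have sp2: "of_int (u2 (Suc n) - u1 (Suc n)) \<le> K n * r + 1"
        by (simp add: K_def algebra_simps)
      have "A \<subseteq> {u1 (Suc n) .. u2 (Suc n)}"
        using u1 u2 Afin by (auto simp: A_def)
      then have "card A \<le> card {u1 (Suc n) .. u2 (Suc n)}" by (intro card_mono) auto
      also have "card {u1 (Suc n) .. u2 (Suc n)} = nat (u2 (Suc n) - u1 (Suc n) + 1)" by simp
      finally have "real (card A) \<le> real (nat (u2 (Suc n) - u1 (Suc n) + 1))" by simp
      also have "\<dots> = of_int (u2 (Suc n) - u1 (Suc n)) + 1" using lt by simp
      finally show ?thesis using sp2 by linarith
    qed
    have cardA: "real (card A) \<le> real (card (C (Suc n)))" using card_mono[OF _ AC] by simp
    have Qn: "\<alpha>' * Den n \<le> Num n \<and> (2 * real n + 4) * ln 2 \<le> (\<alpha>' - \<alpha>) * Den n"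
      using Qall nn0 by blast
    have QSn: "\<alpha>' * Den (Suc n) \<le> Num (Suc n) \<and> (2 * real (Suc n) + 4) * ln 2 \<le> (\<alpha>' - \<alpha>) * Den (Suc n)"
      using Qall nn0 le_SucI by blast
    have Q0: "\<alpha>' * Den n \<le> Num n" "(2 * real n + 4) * ln 2 \<le> (\<alpha>' - \<alpha>) * Den n"
      using Qn by simp_all
    have Q1: "\<alpha>' * Den (Suc n) \<le> Num (Suc n)" "(2 * real (Suc n) + 4) * ln 2 \<le> (\<alpha>' - \<alpha>) * Den (Suc n)"
      using QSn by (simp_all only:)
    have bound: "real (card A) / N (Suc n) \<le> 4 * r powr \<alpha>"
      by (rule NL[OF a Q0 Q1 gap _ cardA spread]) simp
    have sub: "pre \<subseteq> Cyl u1 n A"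
    proof
      fix v assume v: "v \<in> pre"
      have "v \<in> space PM" using v by (simp add: pre_def)
      moreover have "\<forall>k\<in>{1..Suc n}. v k \<in> (if k = Suc n then A else {u1 k})"
      proof
        fix k assume k: "k \<in> {1..Suc n}"
        show "v k \<in> (if k = Suc n then A else {u1 k})"
        proof (cases "k = Suc n")
          case True then show ?thesis using v by (simp add: A_def)
        next
          case False then show ?thesis using agree[OF v u1(1)] k by simp
        qed
      qed
      ultimately show "v \<in> Cyl u1 n A" by (simp add: Cyl_def)
    qed
    have "emeasure PM (Cyl u1 n A) = ennreal (real (card A) / N (Suc n))" by (rule Cyl_measure[OF u1O AC])
    also have "\<dots> \<le> ennreal (4 * diameter U powr \<alpha> + \<eta>)"
    proof (rule ennreal_leI)
      show "real (card A) / N (Suc n) \<le> 4 * diameter U powr \<alpha> + \<eta>" using bound e unfolding r_def by linarith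
    qed
    finally show ?thesis using Cyl_sets[OF u1O AC] sub unfolding pre_def by blast
  qed
qed


lemma ennreal_final:
  fixes X :: ennreal
  assumes "1 \<le> 4 * X + ennreal (1/2)"
  shows "ennreal (1/8) \<le> X"
proof (cases X rule: ennreal_cases)
  case (real x)
  have eq: "ennreal (4 * x + 1/2) = 4 * X + ennreal (1/2)"
  proof -
    have "ennreal (4 * x + 1/2) = ennreal (4 * x) + ennreal (1/2)" using real by (intro ennreal_plus) auto
    also have "ennreal (4 * x) = ennreal 4 * ennreal x" using real by (intro ennreal_mult) auto
    finally show ?thesis using real by simp
  qed
  have "ennreal 1 \<le> ennreal (4 * x + 1/2)" unfolding eq using assms by simp
  moreover have "4 * x + 1/2 \<ge> 0" using real by simp
  ultimately have "1 \<le> 4 * x + 1/2" by (simp only: ennreal_le_iff)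
  then have "1/8 \<le> x" by simp
  then have "ennreal (1/8) \<le> ennreal x" by (rule ennreal_leI)
  then show ?thesis using real by simp
next
  case top then show ?thesis by simp
qed

lemma lower:
  assumes a: "0 < \<alpha>" "\<alpha> < 1" "\<alpha> < \<alpha>'"
    and Qall: "\<forall>m\<ge>n0. \<alpha>' * Den m \<le> Num m \<and> (2 * real m + 4) * ln 2 \<le> (\<alpha>' - \<alpha>) * Den m"
  shows "hausdorff_measure \<alpha> (engel_set s t) \<noteq> 0"
proof -
  define E where "E = engel_set s t"
  define \<delta> where "\<delta> = g n0 / 2"
  have dp: "\<delta> > 0" using g_pos[of n0] by (simp add: \<delta>_def)
  define eta :: "nat \<Rightarrow> real" where "eta i = (1/4) * (1/2)^i" for i
  have eta_pos: "eta i > 0" for i by (simp add: eta_def)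
  have eta_sum: "(\<Sum>i. ennreal (eta i)) = ennreal (1/2)"
  proof -
    have sg: "summable (\<lambda>i. (1/2::real)^i)" by (rule summable_geometric) simp
    have "summable eta" unfolding eta_def by (rule summable_mult[OF sg])
    then have "(\<Sum>i. ennreal (eta i)) = ennreal (\<Sum>i. eta i)"
      by (intro suminf_ennreal2) (auto intro: less_imp_le eta_pos)
    also have "(\<Sum>i. eta i) = (1/4) * (\<Sum>i. (1/2::real)^i)" unfolding eta_def by (rule suminf_mult[OF sg])
    also have "(\<Sum>i. (1/2::real)^i) = 2" using suminf_geometric[of "1/2::real"] by simp
    finally show ?thesis by simp
  qed
  have content: "ennreal (1/8) \<le> hausdorff_content \<alpha> \<delta> E"
    unfolding hausdorff_content_def
  proof (rule INF_greatest)
    fix U assume "U \<in> {U :: nat \<Rightarrow> real set. E \<subseteq> (\<Union>i. U i) \<and> (\<forall>i. bounded (U i) \<and> diameter (U i) \<le> \<delta>)}"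
    then have cov: "E \<subseteq> (\<Union>i. U i)" and Ub: "\<And>i. bounded (U i)" and Ud: "\<And>i. diameter (U i) \<le> \<delta>"
      by auto
    have "\<forall>i. \<exists>S. S \<in> sets PM \<and> {w \<in> space PM. pi w \<in> U i} \<subseteq> S \<and>
            emeasure PM S \<le> ennreal (4 * diameter (U i) powr \<alpha> + eta i)"
    proof
      fix i
      have "diameter (U i) < g n0" using Ud[of i] dp by (simp add: \<delta>_def)
      then show "\<exists>S. S \<in> sets PM \<and> {w \<in> space PM. pi w \<in> U i} \<subseteq> S \<and>
            emeasure PM S \<le> ennreal (4 * diameter (U i) powr \<alpha> + eta i)"
        using mass[OF a Qall Ub[of i] _ eta_pos[of i]] by blast
    qed
    then obtain SS where SS0: "\<forall>i. SS i \<in> sets PM \<and> {w \<in> space PM. pi w \<in> U i} \<subseteq> SS i \<and>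
            emeasure PM (SS i) \<le> ennreal (4 * diameter (U i) powr \<alpha> + eta i)"
      by (rule choice[THEN exE]) blast
    have SS: "\<And>i. SS i \<in> sets PM" "\<And>i. {w \<in> space PM. pi w \<in> U i} \<subseteq> SS i"
      "\<And>i. emeasure PM (SS i) \<le> ennreal (4 * diameter (U i) powr \<alpha> + eta i)"
      using SS0 by blast+
    have spc: "space PM \<subseteq> (\<Union>i. SS i)"
    proof
      fix w assume w: "w \<in> space PM"
      have "pi w \<in> E" unfolding E_def by (rule pi_in_E[OF space_PM_Om[OF w]])
      then obtain i where "pi w \<in> U i" using cov by blast
      then show "w \<in> (\<Union>i. SS i)" using SS(2)[of i] w by blast
    qed
    have "1 = emeasure PM (space PM)" by (simp add: PP.emeasure_space_1)
    also have "\<dots> \<le> emeasure PM (\<Union>i. SS i)"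
      using spc SS(1) by (intro emeasure_mono) auto
    also have "\<dots> \<le> (\<Sum>i. emeasure PM (SS i))"
      using SS(1) by (intro emeasure_subadditive_countably) auto
    also have "\<dots> \<le> (\<Sum>i. ennreal (4 * diameter (U i) powr \<alpha> + eta i))"
      by (intro suminf_le SS(3) summableI)
    also have "\<dots> = (\<Sum>i. 4 * ennreal (diameter (U i) powr \<alpha>) + ennreal (eta i))"
      using eta_pos by (intro suminf_cong) (simp add: ennreal_plus ennreal_mult less_imp_le)
    also have "\<dots> = 4 * (\<Sum>i. ennreal (diameter (U i) powr \<alpha>)) + (\<Sum>i. ennreal (eta i))"
      by (subst suminf_add[symmetric]) auto
    also have "\<dots> = 4 * (\<Sum>i. ennreal (diameter (U i) powr \<alpha>)) + ennreal (1/2)"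
      by (simp add: eta_sum)
    finally show "ennreal (1/8) \<le> (\<Sum>i. ennreal (diameter (U i) powr \<alpha>))"
      by (rule ennreal_final)
  qed
  have "hausdorff_content \<alpha> \<delta> E \<le> hausdorff_measure \<alpha> E"
    unfolding hausdorff_measure_def using dp by (intro SUP_upper) auto
  with content have "ennreal (1/8) \<le> hausdorff_measure \<alpha> E" by (rule order_trans)
  then show ?thesis unfolding E_def by (auto simp: E_def)
qed


lemma E_digit: "x \<in> engel_set s t \<Longrightarrow> 1 \<le> n \<Longrightarrow> engel_digit n x \<in> C n"
  by (auto simp: engel_set_def C_iff)

lemma E_y: assumes x: "x \<in> engel_set s t" shows "0 < (engel_T ^^ k) x \<and> (engel_T ^^ k) x < 1"
proof (induction k)
  case 0 then show ?case using x by (auto simp: engel_set_def)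
next
  case (Suc k)
  let ?y = "(engel_T ^^ k) x"
  have nn: "0 \<le> engel_T ?y" "engel_T ?y < 1" using T_basic[of ?y] Suc by auto
  have d: "engel_digit (Suc (Suc k)) x \<in> C (Suc (Suc k))" by (rule E_digit[OF x]) simp
  have "engel_T ?y \<noteq> 0"
  proof
    assume z: "engel_T ?y = 0"
    have "engel_digit (Suc (Suc k)) x = \<lceil>1 / engel_T ?y\<rceil>" by (simp add: engel_digit_def)
    also have "\<dots> = 0" using z by simp
    finally have "engel_digit (Suc (Suc k)) x = 0" .
    then show False using d C_ge3[of "Suc (Suc k)" 0] by simp
  qed
  then show ?case using nn by simp
qed

lemma E_rec: assumes x: "x \<in> engel_set s t"
  shows "(engel_T ^^ k) x * of_int (engel_digit (Suc k) x) = 1 + (engel_T ^^ (Suc k)) x"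
  using T_basic(3)[of "(engel_T ^^ k) x"] E_y[OF x, of k] by (simp add: engel_digit_def)

lemma E_identity: assumes x: "x \<in> engel_set s t"
  shows "of_int (Dp (\<lambda>k. engel_digit k x) n) * x = of_int (Rr (\<lambda>k. engel_digit k x) n) + (engel_T ^^ n) x"
  using Rr_identity[of n "\<lambda>k. (engel_T ^^ k) x" "\<lambda>k. engel_digit k x"] E_rec[OF x] by simp

lemma E_y_bounds: assumes x: "x \<in> engel_set s t"
  shows "1 / (s (Suc n) + t (Suc n)) \<le> (engel_T ^^ n) x" "(engel_T ^^ n) x < 1 / (s (Suc n) - 1)"
proof -
  let ?y = "(engel_T ^^ n) x"
  let ?d = "engel_digit (Suc n) x"
  have y: "0 < ?y" "?y < 1" using E_y[OF x] by auto
  have dd: "?d = \<lceil>1 / ?y\<rceil>" by (simp add: engel_digit_def)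
  have dC: "?d \<in> C (Suc n)" by (rule E_digit[OF x]) simp
  have d1: "of_int ?d > s (Suc n)" "of_int ?d \<le> s (Suc n) + t (Suc n)" using dC by (auto simp: C_iff)
  have sp: "s (Suc n) \<ge> 2" using s_ge2 by simp
  have "1 / real_of_int ?d \<le> ?y" using T_basic(2)[OF y] dd by simp
  moreover have "1 / (s (Suc n) + t (Suc n)) \<le> 1 / real_of_int ?d"
    using d1 sp by (intro divide_left_mono) auto
  ultimately show "1 / (s (Suc n) + t (Suc n)) \<le> ?y" by linarith
  have "real_of_int \<lceil>1 / ?y\<rceil> < 1 / ?y + 1" by linarith
  then have "of_int ?d - 1 < 1 / ?y" using dd by simp
  then have "s (Suc n) - 1 < 1 / ?y" using d1 by linarith
  then have "?y * (s (Suc n) - 1) < 1" using y by (simp add: field_simps)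
  then show "?y < 1 / (s (Suc n) - 1)" using sp by (simp add: field_simps)
qed


definition W :: "nat \<Rightarrow> (nat \<Rightarrow> int) set" where "W n = PiE {1..n} C"

definition V :: "nat \<Rightarrow> (nat \<Rightarrow> int) \<Rightarrow> real set" where
  "V n w = {(of_int (Rr w n) + 1 / (s (Suc n) + t (Suc n))) / of_int (Dp w n) ..
            (of_int (Rr w n) + 1 / (s (Suc n) - 1)) / of_int (Dp w n)}"

lemma W_finite: "finite (W n)" unfolding W_def by (intro finite_PiE) auto

lemma card_W: "real (card (W n)) = N n"
  unfolding W_def N_def by (simp add: card_PiE)

lemma Dp_W: assumes w: "w \<in> W n" shows "(of_int (Dp w n) :: real) \<ge> P n"
proof -
  have "P n = (\<Prod>k\<in>{1..n}. s k)" by (simp add: P_def)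
  also have "\<dots> \<le> (\<Prod>k\<in>{1..n}. (of_int (w k) :: real))"
  proof (rule prod_mono)
    fix k assume k: "k \<in> {1..n}"
    then have "w k \<in> C k" using w by (auto simp: W_def PiE_def Pi_def)
    then have "of_int (w k) > s k" by (rule C_gt)
    moreover have "s k > 0" using k s_pos by auto
    ultimately show "0 \<le> s k \<and> s k \<le> of_int (w k)" by linarith
  qed
  also have "\<dots> = of_int (Dp w n)" by (simp add: Dp_def)
  finally show ?thesis .
qed

lemma E_in_cover: assumes x: "x \<in> engel_set s t"
  shows "restrict (\<lambda>k. engel_digit k x) {1..n} \<in> W n \<and> x \<in> V n (restrict (\<lambda>k. engel_digit k x) {1..n})"
proof -
  define dg where "dg = (\<lambda>k. engel_digit k x)"
  define w where "w = restrict dg {1..n}"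
  have wW: "w \<in> W n" using E_digit[OF x] by (auto simp: W_def w_def dg_def)
  have ag: "\<And>k. 1 \<le> k \<Longrightarrow> k \<le> n \<Longrightarrow> w k = dg k" by (simp add: w_def)
  have Dw: "Dp w n = Dp dg n" by (rule Dp_cong[OF ag])
  have Rw: "Rr w n = Rr dg n" by (rule Rr_cong[OF ag])
  have Dpos: "(of_int (Dp w n) :: real) > 0" using Dp_W[OF wW] P_pos[of n] by linarith
  have id: "of_int (Dp w n) * x = of_int (Rr w n) + (engel_T ^^ n) x"
    using E_identity[OF x, of n] Dw Rw by (simp add: dg_def)
  have xe: "x = (of_int (Rr w n) + (engel_T ^^ n) x) / of_int (Dp w n)" using id Dpos by (simp add: field_simps)
  have b1: "1 / (s (Suc n) + t (Suc n)) \<le> (engel_T ^^ n) x" "(engel_T ^^ n) x < 1 / (s (Suc n) - 1)"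
    using E_y_bounds[OF x] by auto
  have "(of_int (Rr w n) + 1 / (s (Suc n) + t (Suc n))) / of_int (Dp w n) \<le> (of_int (Rr w n) + (engel_T ^^ n) x) / of_int (Dp w n)"
    using b1 Dpos by (intro divide_right_mono) auto
  then have "(of_int (Rr w n) + 1 / (s (Suc n) + t (Suc n))) / of_int (Dp w n) \<le> x" using xe by linarith
  moreover have "(of_int (Rr w n) + (engel_T ^^ n) x) / of_int (Dp w n) \<le> (of_int (Rr w n) + 1 / (s (Suc n) - 1)) / of_int (Dp w n)"
    using b1 Dpos by (intro divide_right_mono) auto
  then have "x \<le> (of_int (Rr w n) + 1 / (s (Suc n) - 1)) / of_int (Dp w n)" using xe by linarith
  ultimately have "x \<in> V n w" by (simp add: V_def)
  then show ?thesis using wW by (simp add: w_def dg_def)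
qed

lemma exp_Den: "exp (- Den n) = t (Suc n) / (P n * s (Suc n)^2)"
proof -
  have p: "P n > 0" "s (Suc n) > 0" "t (Suc n) > 0" using P_pos s_pos t_pos by auto
  have "- Den n = ln (t (Suc n)) - ln (P n * s (Suc n)^2)"
    unfolding Den_eq using p by (simp add: ln_mult ln_realpow)
  then have "exp (- Den n) = exp (ln (t (Suc n))) / exp (ln (P n * s (Suc n)^2))" by (simp add: exp_diff)
  also have "\<dots> = t (Suc n) / (P n * s (Suc n)^2)" using p by simp
  finally show ?thesis .
qed

lemma gap_bound: "1 / (s (Suc n) - 1) - 1 / (s (Suc n) + t (Suc n)) \<le> 3 * t (Suc n) / s (Suc n)^2"
proof -
  define a where "a = s (Suc n)"
  define b where "b = t (Suc n)"
  have a2: "a \<ge> 2" using s_ge2 by (simp add: a_def)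
  have b2: "b \<ge> 2" using t_ge2 by (simp add: b_def)
  have "1 / (a - 1) - 1 / (a + b) = (b + 1) / ((a - 1) * (a + b))" using a2 b2 by (simp add: field_simps)
  also have "\<dots> \<le> (b + 1) / ((a / 2) * a)"
  proof (rule divide_left_mono)
    show "(a / 2) * a \<le> (a - 1) * (a + b)" using a2 b2 by (intro mult_mono) auto
    show "0 \<le> b + 1" using b2 by simp
    show "0 < (a - 1) * (a + b) * (a / 2 * a)" using a2 b2 by (intro mult_pos_pos) auto
  qed
  also have "\<dots> = 2 * (b + 1) / a^2" using a2 by (simp add: field_simps power2_eq_square)
  also have "\<dots> \<le> 3 * b / a^2" using a2 b2 by (intro divide_right_mono) auto
  finally show ?thesis by (simp add: a_def b_def)
qed

lemma diam_V: assumes w: "w \<in> W n" shows "diameter (V n w) \<le> 3 * exp (- Den n)"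
proof -
  have Dge: "(of_int (Dp w n) :: real) \<ge> P n" by (rule Dp_W[OF w])
  have Dpos: "(of_int (Dp w n) :: real) > 0" using Dge P_pos[of n] by linarith
  have sp: "s (Suc n) \<ge> 2" "t (Suc n) \<ge> 2" using s_ge2 t_ge2 by auto
  have "diameter (V n w) \<le> (1 / (s (Suc n) - 1) - 1 / (s (Suc n) + t (Suc n))) / of_int (Dp w n)"
  proof -
    have "(of_int (Rr w n) + 1 / (s (Suc n) - 1)) / of_int (Dp w n) - (of_int (Rr w n) + 1 / (s (Suc n) + t (Suc n))) / of_int (Dp w n)
      = (1 / (s (Suc n) - 1) - 1 / (s (Suc n) + t (Suc n))) / of_int (Dp w n)"
      by (simp only: diff_divide_distrib[symmetric]) simp
    moreover have "(1 / (s (Suc n) - 1) - 1 / (s (Suc n) + t (Suc n))) / of_int (Dp w n) \<ge> 0"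
    proof -
      have "1 / (s (Suc n) + t (Suc n)) \<le> 1 / (s (Suc n) - 1)" using sp by (intro divide_left_mono) auto
      then show ?thesis using Dpos by simp
    qed
    ultimately show ?thesis unfolding V_def diameter_closed_interval by auto
  qed
  also have "\<dots> \<le> (3 * t (Suc n) / s (Suc n)^2) / of_int (Dp w n)"
    using gap_bound[of n] Dpos by (intro divide_right_mono) auto
  also have "\<dots> \<le> (3 * t (Suc n) / s (Suc n)^2) / P n"
    using Dge P_pos[of n] sp by (intro divide_left_mono) auto
  also have "\<dots> = 3 * exp (- Den n)" unfolding exp_Den by (simp add: field_simps)
  finally show ?thesis .
qed

lemma content_finite_cover:
  fixes U :: "'i \<Rightarrow> real set"
  assumes I: "finite I" and cov: "E \<subseteq> (\<Union>i\<in>I. U i)"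
    and b: "\<And>i. i \<in> I \<Longrightarrow> bounded (U i)" and d: "\<And>i. i \<in> I \<Longrightarrow> diameter (U i) \<le> \<delta>"
    and dp: "\<delta> \<ge> 0" and bp: "\<beta> > 0"
  shows "hausdorff_content \<beta> \<delta> E \<le> (\<Sum>i\<in>I. ennreal (diameter (U i) powr \<beta>))"
proof -
  obtain xs where xs: "set xs = I" "distinct xs" using finite_distinct_list[OF I] by blast
  define Z where "Z j = (if j < length xs then U (xs ! j) else {})" for j
  have mem: "Z \<in> {U :: nat \<Rightarrow> real set. E \<subseteq> (\<Union>i. U i) \<and> (\<forall>i. bounded (U i) \<and> diameter (U i) \<le> \<delta>)}"
  proof (intro CollectI conjI allI)
    show "E \<subseteq> (\<Union>i. Z i)"
    proof
      fix x assume "x \<in> E"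
      then obtain i where i: "i \<in> I" "x \<in> U i" using cov by blast
      then obtain j where "j < length xs" "xs ! j = i" using xs(1) by (metis in_set_conv_nth)
      then show "x \<in> (\<Union>i. Z i)" using i by (auto simp: Z_def)
    qed
    fix j
    show "bounded (Z j)" using b xs(1) by (auto simp: Z_def)
    show "diameter (Z j) \<le> \<delta>" using d xs(1) dp by (auto simp: Z_def)
  qed
  have "hausdorff_content \<beta> \<delta> E \<le> (\<Sum>j. ennreal (diameter (Z j) powr \<beta>))"
    unfolding hausdorff_content_def by (rule INF_lower[OF mem])
  also have "(\<Sum>j. ennreal (diameter (Z j) powr \<beta>)) = (\<Sum>j\<in>{..<length xs}. ennreal (diameter (Z j) powr \<beta>))"
    by (rule suminf_finite) (auto simp: Z_def)
  also have "\<dots> = (\<Sum>j\<in>{..<length xs}. ennreal (diameter (U (xs ! j)) powr \<beta>))"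
    by (rule sum.cong) (auto simp: Z_def)
  also have "\<dots> = sum_list (map (\<lambda>i. ennreal (diameter (U i) powr \<beta>)) xs)"
    by (simp add: sum_list_sum_nth atLeast0LessThan)
  also have "\<dots> = (\<Sum>i\<in>set xs. ennreal (diameter (U i) powr \<beta>))"
    by (rule sum_list_distinct_conv_sum_set[OF xs(2)])
  also have "\<dots> = (\<Sum>i\<in>I. ennreal (diameter (U i) powr \<beta>))" using xs(1) by simp
  finally show ?thesis .
qed


lemma ln_N_upper: "ln (N n) \<le> real n * ln 2 + Num n"
proof -
  have "ln (N n) = (\<Sum>k=1..n. ln (real (card (C k))))"
    unfolding N_def
  proof (rule ln_prod)
    fix i assume "i \<in> {1..n}"
    then show "real (card (C i)) \<noteq> 0" by (intro card_C_nz) simp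
  qed simp
  also have "\<dots> \<le> (\<Sum>k=1..n. ln 2 + ln (t k))"
  proof (rule sum_mono)
    fix k assume k: "k \<in> {1..n}"
    have c: "real (card (C k)) > 0" using k by (intro card_C_rpos) simp
    have "real (card (C k)) \<le> 2 * t k" using card_C_bounds(2)[of k] k by simp
    then have "ln (real (card (C k))) \<le> ln (2 * t k)" using c by simp
    also have "\<dots> = ln 2 + ln (t k)" using t_pos[of k] k by (simp add: ln_mult)
    finally show "ln (real (card (C k))) \<le> ln 2 + ln (t k)" .
  qed
  also have "\<dots> = real n * ln 2 + Num n" by (simp add: Num_def sum.distrib)
  finally show ?thesis .
qed

lemma Den_growth: assumes B: "B > 0" shows "eventually (\<lambda>n. B * real n \<le> Den n) sequentially"
proof -
  have "eventually (\<lambda>k. s k \<ge> exp (2 * B)) sequentially" using h3 unfolding filterlim_at_top by auto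
  then obtain K0 where K0: "\<And>k. k \<ge> K0 \<Longrightarrow> s k \<ge> exp (2 * B)" unfolding eventually_sequentially by auto
  define K1 where "K1 = max K0 1"
  have K1: "K1 \<ge> 1" "K1 \<ge> K0" by (auto simp: K1_def)
  have "B * real n \<le> Den n" if n: "n \<ge> 2 * K1" for n
  proof -
    have "Den n \<ge> ln (P (Suc n))"
      using Den_ge[of n] P_pos[of n] s_pos[of "Suc n"] by (simp add: P_Suc ln_mult)
    moreover have "ln (P (Suc n)) = (\<Sum>k=1..Suc n. ln (s k))" by (rule ln_P)
    moreover have "(\<Sum>k=K1..Suc n. ln (s k)) \<le> (\<Sum>k=1..Suc n. ln (s k))"
      by (rule sum_mono2) (use K1 ln_s_pos in \<open>auto intro: less_imp_le\<close>)
    moreover have "(\<Sum>k=K1..Suc n. 2 * B) \<le> (\<Sum>k=K1..Suc n. ln (s k))"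
    proof (rule sum_mono)
      fix k assume k: "k \<in> {K1..Suc n}"
      then have "s k \<ge> exp (2 * B)" using K0 K1 by auto
      moreover have "exp (2 * B) > 0" by simp
      ultimately have sk: "s k > 0" by linarith
      have "ln (s k) \<ge> ln (exp (2 * B))" using sk \<open>s k \<ge> exp (2 * B)\<close> by (subst ln_le_cancel_iff) auto
      then show "2 * B \<le> ln (s k)" by simp
    qed
    moreover have "(\<Sum>k=K1..Suc n. 2 * B) = real (Suc (Suc n) - K1) * (2 * B)" by simp
    moreover have "B * real n \<le> real (Suc (Suc n) - K1) * (2 * B)"
    proof -
      have "real (Suc (Suc n) - K1) \<ge> real n / 2" using n by linarith
      then have "real (Suc (Suc n) - K1) * (2 * B) \<ge> (real n / 2) * (2 * B)" using B by (intro mult_right_mono) auto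
      then show ?thesis by (simp add: mult.commute)
    qed
    ultimately show ?thesis by linarith
  qed
  then show ?thesis unfolding eventually_sequentially by blast
qed


lemma ev_real_ge: "eventually (\<lambda>n. c \<le> real n) sequentially"
proof -
  have "\<forall>n\<ge>nat \<lceil>c\<rceil>. c \<le> real n" by (auto dest!: of_nat_mono[where 'a=real] intro: order_trans[OF real_nat_ceiling_ge])
  then show ?thesis unfolding eventually_sequentially by blast
qed

lemma upper_bound_at:
  assumes b: "0 < \<beta>" "\<beta>' < \<beta>" and dp: "\<delta> > 0" and e: "\<epsilon> > 0"
    and n1: "Num n < \<beta>' * Den n" and n2: "(2 * ln 2 / (\<beta> - \<beta>')) * real n \<le> Den n"
    and n3: "1 * real n \<le> Den n" and n4: "ln (3 / \<delta>) \<le> real n" and n5: "3 powr \<beta> / \<epsilon> \<le> real n"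
  shows "hausdorff_content \<beta> \<delta> (engel_set s t) \<le> ennreal \<epsilon>"
proof -
  define D where "D = 3 * exp (- Den n)"
  have Dp: "D > 0" by (simp add: D_def)
  have Dd: "D \<le> \<delta>"
  proof -
    have "- Den n \<le> ln (\<delta> / 3)" using n3 n4 dp by (simp add: ln_div)
    then have "exp (- Den n) \<le> exp (ln (\<delta> / 3))" by simp
    also have "\<dots> = \<delta> / 3" using dp by simp
    finally show ?thesis by (simp add: D_def)
  qed
  have cov: "engel_set s t \<subseteq> (\<Union>w\<in>W n. V n w)"
    using E_in_cover by blast
  have "hausdorff_content \<beta> \<delta> (engel_set s t) \<le> (\<Sum>w\<in>W n. ennreal (diameter (V n w) powr \<beta>))"
  proof (rule content_finite_cover[OF W_finite cov])
    fix w assume w: "w \<in> W n"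
    show "bounded (V n w)" by (simp add: V_def)
    show "diameter (V n w) \<le> \<delta>" using diam_V[OF w] Dd by (simp add: D_def)
  qed (use dp b in auto)
  also have "\<dots> \<le> (\<Sum>w\<in>W n. ennreal (D powr \<beta>))"
  proof (rule sum_mono)
    fix w assume w: "w \<in> W n"
    have "diameter (V n w) powr \<beta> \<le> D powr \<beta>"
      using diam_V[OF w] b by (intro powr_mono2) (auto simp: D_def diameter_ge_0 V_def)
    then show "ennreal (diameter (V n w) powr \<beta>) \<le> ennreal (D powr \<beta>)" by (rule ennreal_leI)
  qed
  also have "\<dots> = ennreal (N n * D powr \<beta>)"
    by (simp add: card_W[symmetric] ennreal_mult ennreal_of_nat_eq_real_of_nat)
  also have "\<dots> \<le> ennreal \<epsilon>"
  proof (rule ennreal_leI)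
    have l2: "ln (2::real) > 0" by simp
    have NN: "N n \<le> exp (real n * ln 2 + Num n)"
    proof -
      have "N n = exp (ln (N n))" using N_pos[of n] by simp
      also have "\<dots> \<le> exp (real n * ln 2 + Num n)" using ln_N_upper[of n] by simp
      finally show ?thesis .
    qed
    have DB: "D powr \<beta> = 3 powr \<beta> * exp (- (\<beta> * Den n))"
    proof -
      have "D powr \<beta> = 3 powr \<beta> * exp (- Den n) powr \<beta>" unfolding D_def by (rule powr_mult)
      also have "exp (- Den n) powr \<beta> = exp (- (\<beta> * Den n))" by (simp add: powr_def)
      finally show ?thesis .
    qed
    have ex: "real n * ln 2 + Num n - \<beta> * Den n \<le> - (real n * ln 2)"
    proof -
      have bb: "\<beta> - \<beta>' > 0" using b by simp
      have "(\<beta> - \<beta>') * ((2 * ln 2 / (\<beta> - \<beta>')) * real n) \<le> (\<beta> - \<beta>') * Den n"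
        using n2 bb by (intro mult_left_mono) auto
      then have "2 * ln 2 * real n \<le> (\<beta> - \<beta>') * Den n" using bb by simp
      then show ?thesis using n1 by (simp add: algebra_simps)
    qed
    have "N n * D powr \<beta> \<le> exp (real n * ln 2 + Num n) * (3 powr \<beta> * exp (- (\<beta> * Den n)))"
      unfolding DB using NN by (intro mult_right_mono) auto
    also have "\<dots> = 3 powr \<beta> * exp (real n * ln 2 + Num n - \<beta> * Den n)"
      by (simp add: exp_diff exp_minus field_simps)
    also have "\<dots> \<le> 3 powr \<beta> * exp (- (real n * ln 2))"
      using ex by (intro mult_left_mono) auto
    also have "exp (- (real n * ln 2)) = 1 / 2 ^ n"
      by (simp add: exp_minus exp_of_nat_mult inverse_eq_divide)
    also have "3 powr \<beta> * (1 / 2 ^ n) \<le> \<epsilon>"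
    proof -
      have np: "real n > 0" using n5 e by (smt (verit) divide_pos_pos powr_gt_zero)
      have "real n < 2 ^ n"
      proof -
        have "n < 2 ^ n" by (rule less_exp)
        then have "real n < real (2 ^ n)" by (simp only: of_nat_less_iff)
        then show ?thesis by simp
      qed
      then have "3 powr \<beta> * (1 / 2 ^ n) \<le> 3 powr \<beta> * (1 / real n)"
        using np by (intro mult_left_mono divide_left_mono) auto
      also have "\<dots> \<le> \<epsilon>" using n5 np e by (simp add: field_simps)
      finally show ?thesis .
    qed
    finally show "N n * D powr \<beta> \<le> \<epsilon>" .
  qed
  finally show ?thesis .
qed


lemma upper:
  assumes b: "0 < \<beta>" "\<beta>' < \<beta>" and fr: "frequently (\<lambda>n. Num n < \<beta>' * Den n) sequentially"
  shows "hausdorff_measure \<beta> (engel_set s t) = 0"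
proof -
  have c0: "hausdorff_content \<beta> \<delta> (engel_set s t) = 0" if dp: "\<delta> > 0" for \<delta>
  proof -
    have "hausdorff_content \<beta> \<delta> (engel_set s t) \<le> 0"
    proof (rule ennreal_le_epsilon)
      fix \<epsilon> :: real assume e: "0 < \<epsilon>"
      have Bp: "2 * ln 2 / (\<beta> - \<beta>') > 0" using b by simp
      have ev: "eventually (\<lambda>n. (2 * ln 2 / (\<beta> - \<beta>')) * real n \<le> Den n \<and> 1 * real n \<le> Den n
          \<and> ln (3 / \<delta>) \<le> real n \<and> 3 powr \<beta> / \<epsilon> \<le> real n) sequentially"
        by (intro eventually_conj Den_growth[OF Bp] Den_growth ev_real_ge) simp
      obtain n where n: "Num n < \<beta>' * Den n" "(2 * ln 2 / (\<beta> - \<beta>')) * real n \<le> Den n" "1 * real n \<le> Den n"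
          "ln (3 / \<delta>) \<le> real n" "3 powr \<beta> / \<epsilon> \<le> real n"
        using frequently_ex[OF frequently_eventually_frequently[OF fr ev]] by blast
      have "hausdorff_content \<beta> \<delta> (engel_set s t) \<le> ennreal \<epsilon>"
        by (rule upper_bound_at[OF b dp e n])
      then show "hausdorff_content \<beta> \<delta> (engel_set s t) \<le> 0 + ennreal \<epsilon>" by simp
    qed
    then show ?thesis by simp
  qed
  show ?thesis unfolding hausdorff_measure_def using c0 by simp
qed

definition rat :: "nat \<Rightarrow> ereal" where "rat n = ereal (Num n / Den n)"

lemma rat_bounds: "0 \<le> rat n" "rat n \<le> 1"
  using Num_nonneg[of n] Den_pos[of n] Num_le_Den[of n] by (auto simp: rat_def)

lemma rat_less: "rat n < ereal b \<longleftrightarrow> Num n < b * Den n"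
  using Den_pos[of n] by (simp add: rat_def pos_divide_less_eq)

lemma less_rat: "ereal b < rat n \<longleftrightarrow> b * Den n < Num n"
  using Den_pos[of n] by (simp add: rat_def pos_less_divide_eq)

lemma main: "ereal (hausdorff_dim (engel_set s t)) = liminf rat"
proof -
  define L where "L = liminf rat"
  have L0: "0 \<le> L" unfolding L_def by (rule Liminf_bounded) (simp add: rat_bounds)
  have L1: "L \<le> 1" unfolding L_def by (rule Liminf_le) (auto simp: rat_bounds)
  obtain l where l: "L = ereal l" using L0 L1 by (cases L) auto
  have l01: "0 \<le> l" "l \<le> 1" using L0 L1 l by auto
  define S where "S = {\<beta>. 0 < \<beta> \<and> hausdorff_measure \<beta> (engel_set s t) = 0}"
  have inS: "\<beta> \<in> S" if bl: "\<beta> > l" for \<beta>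
  proof -
    define \<beta>' where "\<beta>' = (l + \<beta>) / 2"
    have b': "l < \<beta>'" "\<beta>' < \<beta>" using bl by (auto simp: \<beta>'_def)
    have "frequently (\<lambda>n. rat n < ereal \<beta>') sequentially"
    proof (rule ccontr)
      assume "\<not> frequently (\<lambda>n. rat n < ereal \<beta>') sequentially"
      then have "eventually (\<lambda>n. ereal \<beta>' \<le> rat n) sequentially"
        by (simp add: not_frequently not_less)
      then have "ereal \<beta>' \<le> L" unfolding L_def by (rule Liminf_bounded)
      then show False using b' l by simp
    qed
    then have fr: "frequently (\<lambda>n. Num n < \<beta>' * Den n) sequentially" by (simp add: rat_less)
    have "hausdorff_measure \<beta> (engel_set s t) = 0" using bl l01 b' by (intro upper[OF _ _ fr]) auto
    then show ?thesis using bl l01 by (simp add: S_def)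
  qed
  have geS: "l \<le> \<beta>" if bS: "\<beta> \<in> S" for \<beta>
  proof (rule ccontr)
    assume "\<not> l \<le> \<beta>"
    then have bl: "\<beta> < l" by simp
    have bp: "0 < \<beta>" and hz: "hausdorff_measure \<beta> (engel_set s t) = 0" using bS by (auto simp: S_def)
    define \<alpha>' where "\<alpha>' = (\<beta> + l) / 2"
    have a': "\<beta> < \<alpha>'" "\<alpha>' < l" using bl by (auto simp: \<alpha>'_def)
    have ev1: "eventually (\<lambda>n. ereal \<alpha>' < rat n) sequentially"
      by (rule less_LiminfD) (use a' l in \<open>simp add: L_def[symmetric]\<close>)
    have Bp: "6 * ln 2 / (\<alpha>' - \<beta>) > 0" using a' by simp
    have ev2: "eventually (\<lambda>n. (6 * ln 2 / (\<alpha>' - \<beta>)) * real n \<le> Den n \<and> 1 \<le> real n) sequentially"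
      by (intro eventually_conj Den_growth[OF Bp] ev_real_ge)
    have "eventually (\<lambda>m. \<alpha>' * Den m \<le> Num m \<and> (2 * real m + 4) * ln 2 \<le> (\<alpha>' - \<beta>) * Den m) sequentially"
      using ev1 ev2
    proof eventually_elim
      case (elim m)
      have q1: "\<alpha>' * Den m \<le> Num m" using elim(1) by (simp add: less_rat)
      have ab: "\<alpha>' - \<beta> > 0" using a' by simp
      have "(\<alpha>' - \<beta>) * ((6 * ln 2 / (\<alpha>' - \<beta>)) * real m) \<le> (\<alpha>' - \<beta>) * Den m"
        using elim(2) ab by (intro mult_left_mono) auto
      then have "6 * ln 2 * real m \<le> (\<alpha>' - \<beta>) * Den m" using ab by simp
      moreover have "(2 * real m + 4) * ln 2 \<le> 6 * ln 2 * real m" using elim(2) by (simp add: algebra_simps)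
      ultimately show ?case using q1 by linarith
    qed
    then obtain n0 where n0: "\<forall>m\<ge>n0. \<alpha>' * Den m \<le> Num m \<and> (2 * real m + 4) * ln 2 \<le> (\<alpha>' - \<beta>) * Den m"
      unfolding eventually_sequentially by blast
    have "hausdorff_measure \<beta> (engel_set s t) \<noteq> 0"
      using lower[OF bp _ a'(1) n0] a' l01 by simp
    then show False using hz by simp
  qed
  have Sne: "l + 1 \<in> S" by (rule inS) simp
  have bdd: "bdd_below S" unfolding bdd_below_def S_def by (rule exI[of _ 0]) auto
  have "Inf S = l"
  proof (rule antisym)
    show "l \<le> Inf S" using Sne geS by (intro cInf_greatest) auto
    show "Inf S \<le> l"
    proof (rule field_le_epsilon)
      fix e :: real assume e: "0 < e"
      have "l + e \<in> S" using e by (intro inS) simp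
      then show "Inf S \<le> l + e" using bdd by (rule cInf_lower)
    qed
  qed
  then show ?thesis unfolding hausdorff_dim_def S_def[symmetric] using l by (simp add: L_def)
qed

end


theorem lemmaA:
  fixes s t :: "nat \<Rightarrow> real"
  assumes pos: "\<forall>n\<ge>1. s n > 0 \<and> t n > 0"
    and h1: "\<forall>n\<ge>1. s n \<ge> t n \<and> t n \<ge> 2"
    and h2: "\<forall>n\<ge>1. s (n + 1) \<ge> s n + t n"
    and h3: "filterlim s at_top sequentially"
  shows "ereal (hausdorff_dim (engel_set s t)) =
    liminf (\<lambda>n. ereal ((\<Sum>k=1..n. ln (t k)) /
       ((\<Sum>k=1..n+1. ln (s k)) + ln (s (n + 1)) - ln (t (n + 1)))))"
proof -
  interpret E: eng s t by (rule eng.intro[OF pos h1 h2 h3])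
  show ?thesis using E.main unfolding E.rat_def E.Num_def E.Den_def by simp
qed

end
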